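(* Let $X,Y,A,B$ be finite sets. Then the formal identity map $\mathcal S_1^{A,X}\otimes_{(2,C)}\mathcal S_1^{B,Y}\to\mathcal O^{\mathcal R_{\rm lowc}}_{XY,AB}$ is an isometric complete contraction.
   Context: $\mathcal S_1^{A,X}$: operators $\mathbb C^A\to\mathbb C^X$, matrix units $\epsilon_{x,a}=e_xe_a^*$, operator space structure as the predual of $M_{A,X}$ via $\langle S,T\rangle={\rm Tr}(ST)$; similarly $\mathcal S_1^{B,Y}$. $\mathcal R_{\rm lowc}$: all finite entrywise direct sums of column isometries $[U_i\otimes V_i]_{i=1}^n$, where $S_i,T_i$ are finite sets, $U_i:\mathbb C^X\to\mathbb C^A\otimes\mathbb C^{S_i}$ with $\sum_iU_i^*U_i=I_X$ and $V_i:\mathbb C^Y\to\mathbb C^B\otimes\mathbb C^{T_i}$ isometries; each is a block operator isometry $W=(W_{(a,b),(x,y)})$ over $(X\times Y,A\times B)$ with entries in $\mathcal B(\mathbb C,\bigoplus_i\mathbb C^{S_i}\otimes\mathbb C^{T_i})$, $W_{(a,b),(x,y)}=((U_i)_{a,x}\otimes(V_i)_{b,y})_i$ where $U_ie_x=\sum_ae_a\otimes(U_i)_{a,x}$. With $\phi_W(\epsilon_{x,a}\otimes\epsilon_{y,b})=W_{(a,b),(x,y)}$, $\mathcal O^{\mathcal R_{\rm lowc}}_{XY,AB}$ is $\mathcal S_1^{A,X}\otimes\mathcal S_1^{B,Y}$ with matricial norms $\sup_{W\in\mathcal R_{\rm lowc}}\|\phi_W^{(n)}(\cdot)\|$. For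 a Banach space $\mathcal Y$, let $M_n(\min\ell_2(\mathcal Y))$ be $M_n(\mathcal Y)$ with the norm $\|[y_{i,j}]\|=\sup\{(\sum_i\|\sum_j\xi_jy_{i,j}\|^2)^{1/2}:\xi\in\mathbb C^n,\|\xi\|\le1\}$ (the operator space $\min\ell_2(\mathcal Y)$). An element of $M_n(\mathcal S_1^{A,X}\otimes\mathcal S_1^{B,Y})$ is a linear map $\omega:M_{A,X}\to M_n(\mathcal S_1^{B,Y})$ via the duality, and $\pi_{(2,C)}(\omega)=\|\omega:M_{A,X}\to M_n(\min\ell_2(\mathcal S_1^{B,Y}))\|_{\rm cb}$, where $\mathcal S_1^{B,Y}$ is taken as a Banach space. $\mathcal S_1^{A,X}\otimes_{(2,C)}\mathcal S_1^{B,Y}$ is the tensor product with these matricial norms. "Isometric complete contraction" means completely contractive and isometric at the first matrix level. *)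

theory Defs
  imports Complex_Main "HOL-Library.Extended_Real"
begin

definition opnorm :: "'i set \<Rightarrow> 'j set \<Rightarrow> ('i \<Rightarrow> 'j \<Rightarrow> complex) \<Rightarrow> real" where
  "opnorm I J M = Sup {sqrt (\<Sum>i\<in>I. (cmod (\<Sum>j\<in>J. M i j * \<xi> j))^2) | \<xi>.
                        (\<Sum>j\<in>J. (cmod (\<xi> j))^2) \<le> 1}"

text \<open>Norm of S_1^{B,Y}: S is an operator C^B -> C^Y (entries S y b); its norm is
  the predual norm for the trace duality with M_{Y,B} (operators C^Y -> C^B, entries T b y).\<close>
definition trace_norm :: "('y::finite \<Rightarrow> 'b::finite \<Rightarrow> complex) \<Rightarrow> real" where
  "trace_norm S = Sup {cmod (\<Sum>y\<in>UNIV. \<Sum>b\<in>UNIV. S y b * T b y) | T.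
                        opnorm (UNIV::'b set) (UNIV::'y set) T \<le> 1}"

text \<open>Norm of a matrix [Z r s] (r,s in I) in M_I(min l2(S_1^{B,Y})), S_1 as a Banach space.\<close>
definition minl2_S1_norm :: "'i set \<Rightarrow> ('i \<Rightarrow> 'i \<Rightarrow> 'y::finite \<Rightarrow> 'b::finite \<Rightarrow> complex) \<Rightarrow> real" where
  "minl2_S1_norm I Z = Sup {sqrt (\<Sum>r\<in>I. (trace_norm (\<lambda>y b. \<Sum>s\<in>I. \<xi> s * Z r s y b))^2) | \<xi>.
                        (\<Sum>s\<in>I. (cmod (\<xi> s))^2) \<le> 1}"

text \<open>An element of M_n(S_1^{A,X} \<otimes> S_1^{B,Y}) is represented by its coefficients
  \<omega> j k x a y b (j,k < n) w.r.t. the basis \<epsilon>_{x,a} \<otimes> \<epsilon>_{y,b}.  Via Tr-duality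
  (\<langle>\<epsilon>_{x,a},T\<rangle> = T a x) it is the map T \<mapsto> [\<Sum>_{x,a} T a x \<omega>_{jk}(x,a,\<cdot>,\<cdot>)]_{jk}
  from M_{A,X} to M_n(S_1^{B,Y}).  pi2C is the cb-norm of this map into
  M_n(min l2(S_1^{B,Y})), with M_m(M_n(E)) = M_{m*n}(E) indexed by pairs.\<close>
definition pi2C :: "nat \<Rightarrow> (nat \<Rightarrow> nat \<Rightarrow> 'x::finite \<Rightarrow> 'a::finite \<Rightarrow> 'y::finite \<Rightarrow> 'b::finite \<Rightarrow> complex) \<Rightarrow> ereal" where
  "pi2C n \<omega> = (SUP mT \<in> {(m, T :: nat \<Rightarrow> nat \<Rightarrow> 'a \<Rightarrow> 'x \<Rightarrow> complex).
        opnorm ({..<m} \<times> (UNIV::'a set)) ({..<m} \<times> (UNIV::'x set)) (\<lambda>(p,a) (q,x). T p q a x) \<le> 1}.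
     ereal (minl2_S1_norm ({..<fst mT} \<times> {..<n})
       (\<lambda>(p,j) (q,k) y b. \<Sum>x\<in>UNIV. \<Sum>a\<in>UNIV. snd mT p q a x * \<omega> j k x a y b)))"

text \<open>Membership in R_lowc: m blocks, S_i = {..<p i}, T_i = {..<q i};
  U i a s x = \<langle>e_a \<otimes> e_s, U_i e_x\<rangle>, V i b t y = \<langle>e_b \<otimes> e_t, V_i e_y\<rangle>;
  \<Sum>_i U_i^* U_i = I_X and each V_i an isometry.\<close>
definition lowc :: "nat \<Rightarrow> (nat \<Rightarrow> nat) \<Rightarrow> (nat \<Rightarrow> nat)
    \<Rightarrow> (nat \<Rightarrow> 'a::finite \<Rightarrow> nat \<Rightarrow> 'x::finite \<Rightarrow> complex)
    \<Rightarrow> (nat \<Rightarrow> 'b::finite \<Rightarrow> nat \<Rightarrow> 'y::finite \<Rightarrow> complex) \<Rightarrow> bool" where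
  "lowc m p q U V \<longleftrightarrow>
     (\<forall>x x'. (\<Sum>i<m. \<Sum>a\<in>UNIV. \<Sum>s<p i. cnj (U i a s x) * U i a s x') = (if x = x' then 1 else 0))
   \<and> (\<forall>i<m. \<forall>y y'. (\<Sum>b\<in>UNIV. \<Sum>t<q i. cnj (V i b t y) * V i b t y') = (if y = y' then 1 else 0))"

text \<open>Index set of K = \<Oplus>_i C^{S_i} \<otimes> C^{T_i}.\<close>
definition lowc_index :: "nat \<Rightarrow> (nat \<Rightarrow> nat) \<Rightarrow> (nat \<Rightarrow> nat) \<Rightarrow> (nat \<times> nat \<times> nat) set" where
  "lowc_index m p q = {(i, s, t). i < m \<and> s < p i \<and> t < q i}"

text \<open>Norm of \<phi>_W^{(n)}(\<omega>) in M_n(B(C,K)) = B(C^n, C^n \<otimes> K).\<close>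
definition phiW_norm :: "nat \<Rightarrow> nat \<Rightarrow> (nat \<Rightarrow> nat) \<Rightarrow> (nat \<Rightarrow> nat)
    \<Rightarrow> (nat \<Rightarrow> 'a::finite \<Rightarrow> nat \<Rightarrow> 'x::finite \<Rightarrow> complex)
    \<Rightarrow> (nat \<Rightarrow> 'b::finite \<Rightarrow> nat \<Rightarrow> 'y::finite \<Rightarrow> complex)
    \<Rightarrow> (nat \<Rightarrow> nat \<Rightarrow> 'x \<Rightarrow> 'a \<Rightarrow> 'y \<Rightarrow> 'b \<Rightarrow> complex) \<Rightarrow> real" where
  "phiW_norm n m p q U V \<omega> = opnorm ({..<n} \<times> lowc_index m p q) {..<n}
     (\<lambda>(j, i, s, t) k. \<Sum>x\<in>UNIV. \<Sum>a\<in>UNIV. \<Sum>y\<in>UNIV. \<Sum>b\<in>UNIV.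
          \<omega> j k x a y b * U i a s x * V i b t y)"

definition O_lowc_norm :: "nat \<Rightarrow> (nat \<Rightarrow> nat \<Rightarrow> 'x::finite \<Rightarrow> 'a::finite \<Rightarrow> 'y::finite \<Rightarrow> 'b::finite \<Rightarrow> complex) \<Rightarrow> ereal" where
  "O_lowc_norm n \<omega> = (SUP W \<in> {(m, p, q, U :: nat \<Rightarrow> 'a \<Rightarrow> nat \<Rightarrow> 'x \<Rightarrow> complex,
                                 V :: nat \<Rightarrow> 'b \<Rightarrow> nat \<Rightarrow> 'y \<Rightarrow> complex). lowc m p q U V}.
      (case W of (m, p, q, U, V) \<Rightarrow> ereal (phiW_norm n m p q U V \<omega>)))"

end

theory Submission
  imports Defs "HOL-Analysis.L2_Norm"
begin

lemma cs_complex: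
  assumes "finite J"
  shows "(cmod (\<Sum>j\<in>J. a j * b j))^2 \<le> (\<Sum>j\<in>J. (cmod (a j))^2) * (\<Sum>j\<in>J. (cmod (b j))^2)"
proof -
  have "cmod (\<Sum>j\<in>J. a j * b j) \<le> (\<Sum>j\<in>J. \<bar>cmod (a j)\<bar> * \<bar>cmod (b j)\<bar>)"
    by (rule order_trans[OF norm_sum]) (simp add: norm_mult)
  also have "\<dots> \<le> L2_set (\<lambda>j. cmod (a j)) J * L2_set (\<lambda>j. cmod (b j)) J"
    by (rule L2_set_mult_ineq)
  finally have 1: "cmod (\<Sum>j\<in>J. a j * b j) \<le> L2_set (\<lambda>j. cmod (a j)) J * L2_set (\<lambda>j. cmod (b j)) J" .
  have "(cmod (\<Sum>j\<in>J. a j * b j))^2 \<le> (L2_set (\<lambda>j. cmod (a j)) J * L2_set (\<lambda>j. cmod (b j)) J)^2"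
    using 1 by (simp add: power_mono)
  also have "\<dots> = (L2_set (\<lambda>j. cmod (a j)) J)^2 * (L2_set (\<lambda>j. cmod (b j)) J)^2"
    by (rule power_mult_distrib)
  also have "\<dots> = (\<Sum>j\<in>J. (cmod (a j))^2) * (\<Sum>j\<in>J. (cmod (b j))^2)"
    unfolding L2_set_def by (simp add: sum_nonneg)
  finally show ?thesis .
qed

lemma opnorm_bdd:
  assumes "finite I" "finite J"
  shows "bdd_above {sqrt (\<Sum>i\<in>I. (cmod (\<Sum>j\<in>J. M i j * \<xi> j))^2) | \<xi>.
                        (\<Sum>j\<in>J. (cmod (\<xi> j))^2) \<le> 1}"
proof (rule bdd_aboveI[where M = "sqrt (\<Sum>i\<in>I. \<Sum>j\<in>J. (cmod (M i j))^2)"], clarify)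
  fix \<xi> :: "'b \<Rightarrow> complex" assume h: "(\<Sum>j\<in>J. (cmod (\<xi> j))^2) \<le> 1"
  have "(cmod (\<Sum>j\<in>J. M i j * \<xi> j))^2 \<le> (\<Sum>j\<in>J. (cmod (M i j))^2)" for i
  proof -
    have "(cmod (\<Sum>j\<in>J. M i j * \<xi> j))^2 \<le> (\<Sum>j\<in>J. (cmod (M i j))^2) * (\<Sum>j\<in>J. (cmod (\<xi> j))^2)"
      by (rule cs_complex[OF assms(2)])
    also have "\<dots> \<le> (\<Sum>j\<in>J. (cmod (M i j))^2) * 1"
      by (rule mult_left_mono[OF h]) (simp add: sum_nonneg)
    finally show ?thesis by simp
  qed
  then show "sqrt (\<Sum>i\<in>I. (cmod (\<Sum>j\<in>J. M i j * \<xi> j))^2) \<le> sqrt (\<Sum>i\<in>I. \<Sum>j\<in>J. (cmod (M i j))^2)"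
    by (simp add: sum_mono)
qed

lemma opnorm_upper:
  assumes "finite I" "finite J" "(\<Sum>j\<in>J. (cmod (\<xi> j))^2) \<le> 1"
  shows "sqrt (\<Sum>i\<in>I. (cmod (\<Sum>j\<in>J. M i j * \<xi> j))^2) \<le> opnorm I J M"
  unfolding opnorm_def
  by (rule cSup_upper[OF _ opnorm_bdd[OF assms(1,2)]]) (use assms(3) in blast)

lemma cmod_div_sqrt: "s > 0 \<Longrightarrow> (cmod (z / complex_of_real (sqrt s)))^2 = (cmod z)^2 / s"
  by (simp add: norm_divide power_divide)

lemma sum_sq_zero: "finite J \<Longrightarrow> (\<Sum>j\<in>J. (cmod (\<xi> j))^2) = 0 \<Longrightarrow> j \<in> J \<Longrightarrow> \<xi> j = 0"
  using sum_nonneg_eq_0_iff[of J "\<lambda>j. (cmod (\<xi> j))^2"] by simp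

lemma opnorm_img: "opnorm I J M = (SUP \<xi>\<in>{\<xi>. (\<Sum>j\<in>J. (cmod (\<xi> j))^2) \<le> 1}. sqrt (\<Sum>i\<in>I. (cmod (\<Sum>j\<in>J. M i j * \<xi> j))^2))"
  unfolding opnorm_def by (simp only: setcompr_eq_image)

lemma opnorm_least:
  assumes "\<And>\<xi>. (\<Sum>j\<in>J. (cmod (\<xi> j))^2) \<le> 1 \<Longrightarrow> sqrt (\<Sum>i\<in>I. (cmod (\<Sum>j\<in>J. M i j * \<xi> j))^2) \<le> c"
  shows "opnorm I J M \<le> c"
  unfolding opnorm_img
proof (rule cSUP_least)
  have "(\<lambda>_. 0) \<in> {\<xi>. (\<Sum>j\<in>J. (cmod (\<xi> j))^2) \<le> 1}" by simp
  then show "{\<xi>. (\<Sum>j\<in>J. (cmod (\<xi> j))^2) \<le> 1} \<noteq> {}" by (rule ex_in_conv[THEN iffD1, OF exI])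
next
  fix \<xi> assume "\<xi> \<in> {\<xi>. (\<Sum>j\<in>J. (cmod (\<xi> j))^2) \<le> 1}"
  then show "sqrt (\<Sum>i\<in>I. (cmod (\<Sum>j\<in>J. M i j * \<xi> j))^2) \<le> c" using assms by simp
qed

lemma opnorm_nonneg:
  assumes "finite I" "finite J"
  shows "0 \<le> opnorm I J M"
  using opnorm_upper[OF assms, of "\<lambda>_. 0" M] by simp

lemma opnorm_apply:
  assumes "finite I" "finite J"
  shows "(\<Sum>i\<in>I. (cmod (\<Sum>j\<in>J. M i j * \<xi> j))^2) \<le> (opnorm I J M)^2 * (\<Sum>j\<in>J. (cmod (\<xi> j))^2)"
proof (cases "(\<Sum>j\<in>J. (cmod (\<xi> j))^2) = 0")
  case True
  have "(\<Sum>j\<in>J. M i j * \<xi> j) = 0" for i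
    using sum_sq_zero[OF assms(2) True] by simp
  then show ?thesis by (simp add: True)
next
  case False
  define s where "s = (\<Sum>j\<in>J. (cmod (\<xi> j))^2)"
  have s0: "s > 0" using False unfolding s_def by (simp add: sum_nonneg order_less_le)
  define \<zeta> where "\<zeta> j = \<xi> j / complex_of_real (sqrt s)" for j
  have "(\<Sum>j\<in>J. (cmod (\<zeta> j))^2) = (\<Sum>j\<in>J. (cmod (\<xi> j))^2) / s"
    unfolding \<zeta>_def cmod_div_sqrt[OF s0] by (rule sum_divide_distrib[symmetric])
  then have z1: "(\<Sum>j\<in>J. (cmod (\<zeta> j))^2) \<le> 1" using s0 s_def by simp
  have eq: "(\<Sum>i\<in>I. (cmod (\<Sum>j\<in>J. M i j * \<zeta> j))^2) = (\<Sum>i\<in>I. (cmod (\<Sum>j\<in>J. M i j * \<xi> j))^2) / s"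
  proof -
    have "(\<Sum>j\<in>J. M i j * \<zeta> j) = (\<Sum>j\<in>J. M i j * \<xi> j) / complex_of_real (sqrt s)" for i
      unfolding \<zeta>_def by (simp add: sum_divide_distrib)
    then have "(cmod (\<Sum>j\<in>J. M i j * \<zeta> j))^2 = (cmod (\<Sum>j\<in>J. M i j * \<xi> j))^2 / s" for i
      by (simp add: cmod_div_sqrt[OF s0])
    then show ?thesis by (simp add: sum_divide_distrib)
  qed
  define X where "X = (\<Sum>i\<in>I. (cmod (\<Sum>j\<in>J. M i j * \<zeta> j))^2)"
  have X0: "X \<ge> 0" unfolding X_def by (simp add: sum_nonneg)
  have "sqrt X \<le> opnorm I J M"
    unfolding X_def by (rule opnorm_upper[OF assms z1])
  then have "(sqrt X)^2 \<le> (opnorm I J M)^2"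
    by (rule power_mono) (simp add: X0)
  then have "X \<le> (opnorm I J M)^2" using X0 by simp
  then have "(\<Sum>i\<in>I. (cmod (\<Sum>j\<in>J. M i j * \<xi> j))^2) / s \<le> (opnorm I J M)^2"
    using eq X_def by simp
  then show ?thesis unfolding s_def[symmetric] by (simp add: pos_divide_le_eq[OF s0])
qed

lemma contraction_iff:
  assumes "finite I" "finite J"
  shows "opnorm I J M \<le> 1 \<longleftrightarrow> (\<forall>\<xi>. (\<Sum>i\<in>I. (cmod (\<Sum>j\<in>J. M i j * \<xi> j))^2) \<le> (\<Sum>j\<in>J. (cmod (\<xi> j))^2))"
proof
  assume h: "opnorm I J M \<le> 1"
  have o1: "(opnorm I J M)^2 \<le> 1" using h opnorm_nonneg[OF assms] by (simp add: power_le_one)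
  show "\<forall>\<xi>. (\<Sum>i\<in>I. (cmod (\<Sum>j\<in>J. M i j * \<xi> j))^2) \<le> (\<Sum>j\<in>J. (cmod (\<xi> j))^2)"
  proof
    fix \<xi> :: "'b \<Rightarrow> complex"
    have "(\<Sum>i\<in>I. (cmod (\<Sum>j\<in>J. M i j * \<xi> j))^2) \<le> (opnorm I J M)^2 * (\<Sum>j\<in>J. (cmod (\<xi> j))^2)"
      by (rule opnorm_apply[OF assms])
    also have "\<dots> \<le> 1 * (\<Sum>j\<in>J. (cmod (\<xi> j))^2)"
      by (rule mult_right_mono[OF o1]) (simp add: sum_nonneg)
    finally show "(\<Sum>i\<in>I. (cmod (\<Sum>j\<in>J. M i j * \<xi> j))^2) \<le> (\<Sum>j\<in>J. (cmod (\<xi> j))^2)" by simp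
  qed
next
  assume h: "\<forall>\<xi>. (\<Sum>i\<in>I. (cmod (\<Sum>j\<in>J. M i j * \<xi> j))^2) \<le> (\<Sum>j\<in>J. (cmod (\<xi> j))^2)"
  show "opnorm I J M \<le> 1"
  proof (rule opnorm_least)
    fix \<xi> :: "'b \<Rightarrow> complex" assume h1: "(\<Sum>j\<in>J. (cmod (\<xi> j))^2) \<le> 1"
    have "(\<Sum>i\<in>I. (cmod (\<Sum>j\<in>J. M i j * \<xi> j))^2) \<le> 1" using h h1 order_trans by blast
    then show "sqrt (\<Sum>i\<in>I. (cmod (\<Sum>j\<in>J. M i j * \<xi> j))^2) \<le> 1" by simp
  qed
qed


lemma gram:
  fixes W :: "'k \<Rightarrow> 'x::finite \<Rightarrow> complex"
  shows "complex_of_real (\<Sum>k\<in>K. (cmod (\<Sum>x\<in>UNIV. W k x * \<zeta> x))^2)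
     = (\<Sum>x\<in>UNIV. \<Sum>x'\<in>UNIV. cnj (\<zeta> x) * (\<Sum>k\<in>K. cnj (W k x) * W k x') * \<zeta> x')"
proof -
  have "complex_of_real ((cmod (\<Sum>x\<in>UNIV. W k x * \<zeta> x))^2)
     = (\<Sum>x\<in>UNIV. \<Sum>x'\<in>UNIV. cnj (\<zeta> x) * (cnj (W k x) * W k x') * \<zeta> x')" for k
  proof -
    have "complex_of_real ((cmod (\<Sum>x\<in>UNIV. W k x * \<zeta> x))^2)
        = cnj (\<Sum>x\<in>UNIV. W k x * \<zeta> x) * (\<Sum>x\<in>UNIV. W k x * \<zeta> x)"
      by (simp only: complex_norm_square mult.commute)
    also have "\<dots> = (\<Sum>x\<in>UNIV. cnj (W k x) * cnj (\<zeta> x)) * (\<Sum>x'\<in>UNIV. W k x' * \<zeta> x')"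
      by simp
    also have "\<dots> = (\<Sum>x\<in>UNIV. \<Sum>x'\<in>UNIV. (cnj (W k x) * cnj (\<zeta> x)) * (W k x' * \<zeta> x'))"
      by (rule sum_product)
    also have "\<dots> = (\<Sum>x\<in>UNIV. \<Sum>x'\<in>UNIV. cnj (\<zeta> x) * (cnj (W k x) * W k x') * \<zeta> x')"
      by (simp add: mult_ac)
    finally show ?thesis .
  qed
  then have "complex_of_real (\<Sum>k\<in>K. (cmod (\<Sum>x\<in>UNIV. W k x * \<zeta> x))^2)
     = (\<Sum>k\<in>K. \<Sum>x\<in>UNIV. \<Sum>x'\<in>UNIV. cnj (\<zeta> x) * (cnj (W k x) * W k x') * \<zeta> x')"
    by simp
  also have "\<dots> = (\<Sum>x\<in>UNIV. \<Sum>x'\<in>UNIV. \<Sum>k\<in>K. cnj (\<zeta> x) * (cnj (W k x) * W k x') * \<zeta> x')"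
    by (simp add: sum.swap[of _ K])
  also have "\<dots> = (\<Sum>x\<in>UNIV. \<Sum>x'\<in>UNIV. cnj (\<zeta> x) * (\<Sum>k\<in>K. cnj (W k x) * W k x') * \<zeta> x')"
    by (simp add: sum_distrib_left sum_distrib_right)
  finally show ?thesis .
qed

lemma norm_sq_of_real:
  fixes \<zeta> :: "'x::finite \<Rightarrow> complex"
  shows "complex_of_real (\<Sum>x\<in>UNIV. (cmod (\<zeta> x))^2) = (\<Sum>x\<in>UNIV. cnj (\<zeta> x) * \<zeta> x)"
  by (simp only: of_real_sum complex_norm_square mult.commute)

lemma mult_delta: "(c * (if P then 1 else 0) * d) = (if P then c * d else (0::complex))"
  by simp

lemma iso_sum:
  fixes W :: "'k \<Rightarrow> 'x::finite \<Rightarrow> complex"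
  assumes "\<And>x x'. (\<Sum>k\<in>K. cnj (W k x) * W k x') = (if x = x' then 1 else 0)"
  shows "(\<Sum>k\<in>K. (cmod (\<Sum>x\<in>UNIV. W k x * \<zeta> x))^2) = (\<Sum>x\<in>UNIV. (cmod (\<zeta> x))^2)"
proof -
  have "complex_of_real (\<Sum>k\<in>K. (cmod (\<Sum>x\<in>UNIV. W k x * \<zeta> x))^2)
      = (\<Sum>x\<in>UNIV. \<Sum>x'\<in>UNIV. cnj (\<zeta> x) * (if x = x' then 1 else 0) * \<zeta> x')"
    unfolding gram assms ..
  also have "\<dots> = (\<Sum>x\<in>UNIV. cnj (\<zeta> x) * \<zeta> x)"
    by (simp add: mult_delta sum.delta sum.delta')
  also have "\<dots> = complex_of_real (\<Sum>x\<in>UNIV. (cmod (\<zeta> x))^2)"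
    by (rule norm_sq_of_real[symmetric])
  finally show ?thesis by (simp only: of_real_eq_iff)
qed


lemma tn_img: "trace_norm S = (SUP T\<in>{T. opnorm (UNIV::'b::finite set) (UNIV::'y::finite set) T \<le> 1}.
     cmod (\<Sum>y\<in>UNIV. \<Sum>b\<in>UNIV. (S :: 'y \<Rightarrow> 'b \<Rightarrow> complex) y b * T b y))"
  unfolding trace_norm_def by (simp only: setcompr_eq_image)

lemma opnorm_zero: "opnorm I J (\<lambda>_ _. 0) \<le> 1"
  by (rule opnorm_least) simp

lemma contr_entry:
  assumes "opnorm (UNIV::'b::finite set) (UNIV::'y::finite set) T \<le> 1"
  shows "cmod (T b y) \<le> 1"
proof -
  define \<xi> where "\<xi> = (\<lambda>y'. if y' = y then (1::complex) else 0)"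
  have "(\<Sum>b'\<in>UNIV. (cmod (\<Sum>y'\<in>UNIV. T b' y' * \<xi> y'))^2) \<le> (\<Sum>y'\<in>UNIV. (cmod (\<xi> y'))^2)"
    using assms contraction_iff[of "UNIV::'b set" "UNIV::'y set" T] by simp
  moreover have "(\<Sum>y'\<in>UNIV. T b' y' * \<xi> y') = T b' y" for b'
    unfolding \<xi>_def by (simp add: if_distrib cong: if_cong)
  moreover have "(\<Sum>y'\<in>UNIV. (cmod (\<xi> y'))^2) = 1"
  proof -
    have "(cmod (\<xi> y'))^2 = (if y' = y then 1 else 0)" for y' unfolding \<xi>_def by simp
    then show ?thesis by simp
  qed
  ultimately have "(\<Sum>b'\<in>UNIV. (cmod (T b' y))^2) \<le> 1" by simp
  moreover have "(cmod (T b y))^2 \<le> (\<Sum>b'\<in>UNIV. (cmod (T b' y))^2)"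
    by (rule member_le_sum) auto
  ultimately have "(cmod (T b y))^2 \<le> 1" by linarith
  then show ?thesis by (simp add: power_le_one_iff abs_square_le_1)
qed

lemma tn_bdd:
  fixes S :: "'y::finite \<Rightarrow> 'b::finite \<Rightarrow> complex"
  shows "bdd_above ((\<lambda>T. cmod (\<Sum>y\<in>UNIV. \<Sum>b\<in>UNIV. S y b * T b y)) ` {T. opnorm (UNIV::'b set) (UNIV::'y set) T \<le> 1})"
proof (rule bdd_aboveI2)
  fix T :: "'b \<Rightarrow> 'y \<Rightarrow> complex" assume "T \<in> {T. opnorm (UNIV::'b set) (UNIV::'y set) T \<le> 1}"
  then have e: "cmod (T b y) \<le> 1" for b y using contr_entry by blast
  have "cmod (\<Sum>y\<in>UNIV. \<Sum>b\<in>UNIV. S y b * T b y) \<le> (\<Sum>y\<in>UNIV. cmod (\<Sum>b\<in>UNIV. S y b * T b y))"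
    by (rule norm_sum)
  also have "\<dots> \<le> (\<Sum>y\<in>UNIV. \<Sum>b\<in>UNIV. cmod (S y b * T b y))"
    by (rule sum_mono, rule norm_sum)
  also have "\<dots> \<le> (\<Sum>y\<in>UNIV. \<Sum>b\<in>UNIV. cmod (S y b))"
  proof (rule sum_mono, rule sum_mono)
    fix y b
    have "cmod (S y b) * cmod (T b y) \<le> cmod (S y b) * 1"
      by (rule mult_left_mono[OF e]) simp
    then show "cmod (S y b * T b y) \<le> cmod (S y b)" by (simp add: norm_mult)
  qed
  finally show "cmod (\<Sum>y\<in>UNIV. \<Sum>b\<in>UNIV. S y b * T b y) \<le> (\<Sum>y\<in>UNIV. \<Sum>b\<in>UNIV. cmod (S y b))" .
qed

lemma tn_upper:
  fixes S :: "'y::finite \<Rightarrow> 'b::finite \<Rightarrow> complex"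
  assumes "opnorm (UNIV::'b set) (UNIV::'y set) T \<le> 1"
  shows "cmod (\<Sum>y\<in>UNIV. \<Sum>b\<in>UNIV. S y b * T b y) \<le> trace_norm S"
  unfolding tn_img by (rule cSUP_upper[OF _ tn_bdd]) (use assms in simp)

lemma tn_least:
  fixes S :: "'y::finite \<Rightarrow> 'b::finite \<Rightarrow> complex"
  assumes "\<And>T. opnorm (UNIV::'b set) (UNIV::'y set) T \<le> 1 \<Longrightarrow> cmod (\<Sum>y\<in>UNIV. \<Sum>b\<in>UNIV. S y b * T b y) \<le> c"
  shows "trace_norm S \<le> c"
  unfolding tn_img
proof (rule cSUP_least)
  have "(\<lambda>_ _. 0) \<in> {T. opnorm (UNIV::'b set) (UNIV::'y set) T \<le> 1}" using opnorm_zero by simp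
  then show "{T. opnorm (UNIV::'b set) (UNIV::'y set) T \<le> 1} \<noteq> {}" by (rule ex_in_conv[THEN iffD1, OF exI])
qed (use assms in simp)

lemma tn_nonneg: "0 \<le> trace_norm (S :: 'y::finite \<Rightarrow> 'b::finite \<Rightarrow> complex)"
  using tn_upper[OF opnorm_zero, of S] by simp

lemma tn_zero: "trace_norm (\<lambda>(y::'y::finite) (b::'b::finite). 0) = 0"
proof (rule antisym)
  show "trace_norm (\<lambda>(y::'y) (b::'b). 0) \<le> 0" by (rule tn_least) simp
  show "0 \<le> trace_norm (\<lambda>(y::'y) (b::'b). 0)" by (rule tn_nonneg)
qed

lemma tn_approx:
  fixes S :: "'y::finite \<Rightarrow> 'b::finite \<Rightarrow> complex"
  assumes "z < 1"
  shows "\<exists>T. opnorm (UNIV::'b set) (UNIV::'y set) T \<le> 1 \<and> z * trace_norm S \<le> cmod (\<Sum>y\<in>UNIV. \<Sum>b\<in>UNIV. S y b * T b y)"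
proof (cases "trace_norm S = 0")
  case True
  then show ?thesis using opnorm_zero by (intro exI[of _ "\<lambda>_ _. 0"]) simp
next
  case False
  then have pos: "trace_norm S > 0" using tn_nonneg[of S] by simp
  show ?thesis
  proof (rule ccontr)
    assume "\<not> ?thesis"
    then have "\<And>T. opnorm (UNIV::'b set) (UNIV::'y set) T \<le> 1 \<Longrightarrow> cmod (\<Sum>y\<in>UNIV. \<Sum>b\<in>UNIV. S y b * T b y) \<le> z * trace_norm S"
      by force
    then have "trace_norm S \<le> z * trace_norm S" by (rule tn_least)
    then show False using pos assms by (simp add: mult_le_cancel_right1)
  qed
qed


lemma sum_fst_snd: "(\<Sum>k\<in>A \<times> B. f (fst k) (snd k)) = (\<Sum>a\<in>A. \<Sum>b\<in>B. f a b)"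
  by (simp add: sum.cartesian_product split_def)

lemma iso_tn:
  fixes V :: "'b::finite \<Rightarrow> nat \<Rightarrow> 'y::finite \<Rightarrow> complex" and S :: "'y \<Rightarrow> 'b \<Rightarrow> complex"
  assumes iso: "\<And>y y'. (\<Sum>b\<in>UNIV. \<Sum>t<q. cnj (V b t y) * V b t y') = (if y = y' then 1 else 0)"
  shows "(\<Sum>t<q. (cmod (\<Sum>y\<in>UNIV. \<Sum>b\<in>UNIV. S y b * V b t y))^2) \<le> (trace_norm S)^2"
proof -
  define c where "c t = (\<Sum>y\<in>UNIV. \<Sum>b\<in>UNIV. S y b * V b t y)" for t
  define N2 where "N2 = (\<Sum>t<q. (cmod (c t))^2)"
  have N2ge: "N2 \<ge> 0" unfolding N2_def by (simp add: sum_nonneg)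
  show ?thesis
  proof (cases "N2 = 0")
    case True
    then show ?thesis unfolding c_def[symmetric] N2_def[symmetric] by simp
  next
    case False
    define N where "N = sqrt N2"
    have Npos: "N > 0" using False N2ge unfolding N_def by simp
    have NN: "N * N = N2" unfolding N_def using N2ge by simp
    define \<gamma> where "\<gamma> t = cnj (c t) / complex_of_real N" for t
    define V' where "V' b y = (\<Sum>t<q. \<gamma> t * V b t y)" for b y
    have "(\<Sum>y\<in>UNIV. \<Sum>b\<in>UNIV. S y b * V' b y) = (\<Sum>y\<in>UNIV. \<Sum>b\<in>UNIV. \<Sum>t<q. \<gamma> t * (S y b * V b t y))"
      unfolding V'_def by (simp add: sum_distrib_left mult_ac)
    also have "\<dots> = (\<Sum>t<q. \<Sum>y\<in>UNIV. \<Sum>b\<in>UNIV. \<gamma> t * (S y b * V b t y))"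
      by (simp add: sum.swap[of _ "{..<q}"])
    also have "\<dots> = (\<Sum>t<q. \<gamma> t * c t)"
      unfolding c_def by (simp add: sum_distrib_left)
    also have "\<dots> = (\<Sum>t<q. cnj (c t) * c t) / complex_of_real N"
      unfolding \<gamma>_def by (simp add: sum_divide_distrib)
    also have "(\<Sum>t<q. cnj (c t) * c t) = complex_of_real N2"
      unfolding N2_def of_real_sum by (simp only: complex_norm_square mult.commute)
    also have "complex_of_real N2 / complex_of_real N = complex_of_real N"
      using Npos NN by (simp add: field_simps flip: of_real_mult)
    finally have tr: "(\<Sum>y\<in>UNIV. \<Sum>b\<in>UNIV. S y b * V' b y) = complex_of_real N" .
    have g1: "(\<Sum>t<q. (cmod (\<gamma> t))^2) = 1"
    proof -
      have "(\<Sum>t<q. (cmod (\<gamma> t))^2) = (\<Sum>t<q. (cmod (c t))^2) / (N * N)"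
        unfolding \<gamma>_def by (simp add: norm_divide power_divide sum_divide_distrib power2_eq_square)
      then show ?thesis using NN N2_def False by simp
    qed
    have contr: "opnorm (UNIV::'b set) (UNIV::'y set) V' \<le> 1"
      unfolding contraction_iff[OF finite_UNIV finite_UNIV]
    proof
      fix \<zeta> :: "'y \<Rightarrow> complex"
      define w where "w b t = (\<Sum>y\<in>UNIV. V b t y * \<zeta> y)" for b t
      have e1: "(\<Sum>y\<in>UNIV. V' b y * \<zeta> y) = (\<Sum>t<q. \<gamma> t * w b t)" for b
        unfolding V'_def w_def by (simp add: sum_distrib_left sum_distrib_right mult_ac sum.swap[of _ "{..<q}"])
      have e2: "(cmod (\<Sum>t<q. \<gamma> t * w b t))^2 \<le> (\<Sum>t<q. (cmod (w b t))^2)" for b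
        using cs_complex[of "{..<q}" \<gamma> "w b"] g1 by simp
      have iso': "(\<Sum>k\<in>UNIV \<times> {..<q}. cnj (V (fst k) (snd k) y) * V (fst k) (snd k) y') = (if y = y' then 1 else 0)" for y y'
        unfolding sum_fst_snd[where f="\<lambda>b t. cnj (V b t y) * V b t y'"] by (rule iso)
      have e3: "(\<Sum>k\<in>UNIV \<times> {..<q}. (cmod (\<Sum>y\<in>UNIV. V (fst k) (snd k) y * \<zeta> y))^2) = (\<Sum>y\<in>UNIV. (cmod (\<zeta> y))^2)"
        by (rule iso_sum[OF iso'])
      have "(\<Sum>b\<in>UNIV. (cmod (\<Sum>y\<in>UNIV. V' b y * \<zeta> y))^2) \<le> (\<Sum>b\<in>UNIV. \<Sum>t<q. (cmod (w b t))^2)"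
        unfolding e1 by (rule sum_mono, rule e2)
      also have "\<dots> = (\<Sum>y\<in>UNIV. (cmod (\<zeta> y))^2)"
        using e3 unfolding w_def sum_fst_snd[where f="\<lambda>b t. (cmod (\<Sum>y\<in>UNIV. V b t y * \<zeta> y))^2"] .
      finally show "(\<Sum>b\<in>UNIV. (cmod (\<Sum>y\<in>UNIV. V' b y * \<zeta> y))^2) \<le> (\<Sum>y\<in>UNIV. (cmod (\<zeta> y))^2)" .
    qed
    have "N \<le> trace_norm S"
      using tn_upper[OF contr, of S] tr Npos by simp
    then have "N * N \<le> trace_norm S * trace_norm S"
      using Npos by (simp add: mult_mono)
    then show ?thesis unfolding c_def[symmetric] N2_def[symmetric] using NN by (simp add: power2_eq_square)
  qed
qed


lemma lowc_index_Sigma: "lowc_index m p q = Sigma {..<m} (\<lambda>i. {..<p i} \<times> {..<q i})"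
  unfolding lowc_index_def by auto

lemma sum_lowc:
  "(\<Sum>z\<in>{..<n} \<times> lowc_index m p q. f z) = (\<Sum>j<n. \<Sum>i<m. \<Sum>s<p i. \<Sum>t<q i. f (j, i, s, t))"
proof -
  have "(\<Sum>z\<in>{..<n} \<times> lowc_index m p q. f z) = (\<Sum>j<n. \<Sum>w\<in>lowc_index m p q. f (j, w))"
    by (simp add: sum.cartesian_product)
  also have "\<dots> = (\<Sum>j<n. \<Sum>i<m. \<Sum>st\<in>{..<p i} \<times> {..<q i}. f (j, i, st))"
    unfolding lowc_index_Sigma by (simp add: sum.Sigma)
  also have "\<dots> = (\<Sum>j<n. \<Sum>i<m. \<Sum>s<p i. \<Sum>t<q i. f (j, i, s, t))"
    by (simp add: sum.cartesian_product)
  finally show ?thesis .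
qed

lemma sum_Sigma3:
  assumes "finite A" "finite B" "\<And>i. finite (C i)"
  shows "(\<Sum>k\<in>Sigma A (\<lambda>i. B \<times> C i). f (fst k) (fst (snd k)) (snd (snd k))) = (\<Sum>i\<in>A. \<Sum>b\<in>B. \<Sum>c\<in>C i. f i b c)"
proof -
  have "(\<Sum>k\<in>Sigma A (\<lambda>i. B \<times> C i). f (fst k) (fst (snd k)) (snd (snd k)))
      = (\<Sum>i\<in>A. \<Sum>bc\<in>B \<times> C i. f i (fst bc) (snd bc))"
    using assms by (simp add: sum.Sigma split_def)
  also have "\<dots> = (\<Sum>i\<in>A. \<Sum>b\<in>B. \<Sum>c\<in>C i. f i b c)"
    using assms by (simp add: sum.cartesian_product split_def)
  finally show ?thesis .
qed

lemma reindex_div_mod: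
  fixes m P :: nat
  shows "(\<Sum>r<m*P. f (r div P) (r mod P)) = (\<Sum>i<m. \<Sum>s<P. f i s)"
proof (cases "P = 0")
  case True then show ?thesis by simp
next
  case False
  have "(\<Sum>r<m*P. f (r div P) (r mod P)) = (\<Sum>k\<in>{..<m} \<times> {..<P}. f (fst k) (snd k))"
  proof (rule sum.reindex_bij_witness[where i = "\<lambda>k. fst k * P + snd k" and j = "\<lambda>r. (r div P, r mod P)"])
    fix r assume "r \<in> {..<m*P}"
    then show "fst (r div P, r mod P) * P + snd (r div P, r mod P) = r" by simp
  next
    fix r assume "r \<in> {..<m*P}"
    then have "r div P < m" by (simp add: less_mult_imp_div_less)
    moreover have "r mod P < P" using False by simp
    ultimately show "(r div P, r mod P) \<in> {..<m} \<times> {..<P}" by simp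
  next
    fix k assume k: "k \<in> {..<m} \<times> {..<P}"
    obtain i s where ks: "k = (i, s)" by (cases k)
    with k have s: "s < P" by auto
    have "(i * P + s) div P = i" using s by simp
    moreover have "(i * P + s) mod P = s" using s by simp
    ultimately show "((fst k * P + snd k) div P, (fst k * P + snd k) mod P) = k"
      using ks by simp
  next
    fix k assume k: "k \<in> {..<m} \<times> {..<P}"
    obtain i s where ks: "k = (i, s)" by (cases k)
    with k have i: "i < m" and s: "s < P" by auto
    have "i * P + s < Suc i * P" using s by simp
    also have "\<dots> \<le> m * P" using i by (intro mult_le_mono1) simp
    finally show "fst k * P + snd k \<in> {..<m*P}" using ks by simp
  next
    fix r assume "r \<in> {..<m*P}"
    then show "f (fst (r div P, r mod P)) (snd (r div P, r mod P)) = f (r div P) (r mod P)" by simp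
  qed
  also have "\<dots> = (\<Sum>i<m. \<Sum>s<P. f i s)" by (rule sum_fst_snd)
  finally show ?thesis .
qed

lemma reindex_blocks:
  fixes m P :: nat
  assumes "\<And>i. i < m \<Longrightarrow> p i \<le> P"
  shows "(\<Sum>r<m*P. if r mod P < p (r div P) then f (r div P) (r mod P) else 0) = (\<Sum>i<m. \<Sum>s<p i. f i s)"
proof -
  have "(\<Sum>r<m*P. if r mod P < p (r div P) then f (r div P) (r mod P) else 0)
      = (\<Sum>i<m. \<Sum>s<P. if s < p i then f i s else 0)"
    by (rule reindex_div_mod[where f = "\<lambda>i s. if s < p i then f i s else 0"])
  also have "\<dots> = (\<Sum>i<m. \<Sum>s<p i. f i s)"
  proof (rule sum.cong[OF refl])
    fix i assume "i \<in> {..<m}"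
    then have "p i \<le> P" using assms by auto
    then have "{..<p i} \<subseteq> {..<P}" by auto
    then show "(\<Sum>s<P. if s < p i then f i s else 0) = (\<Sum>s<p i. f i s)"
      by (simp add: sum.If_cases Int_absorb1 lessThan_def)
  qed
  finally show ?thesis .
qed


lemma tn_le_l1:
  fixes S :: "'y::finite \<Rightarrow> 'b::finite \<Rightarrow> complex"
  shows "trace_norm S \<le> (\<Sum>y\<in>UNIV. \<Sum>b\<in>UNIV. cmod (S y b))"
proof (rule tn_least)
  fix T :: "'b \<Rightarrow> 'y \<Rightarrow> complex" assume "opnorm (UNIV::'b set) (UNIV::'y set) T \<le> 1"
  then have e: "cmod (T b y) \<le> 1" for b y using contr_entry by blast
  have "cmod (\<Sum>y\<in>UNIV. \<Sum>b\<in>UNIV. S y b * T b y) \<le> (\<Sum>y\<in>UNIV. cmod (\<Sum>b\<in>UNIV. S y b * T b y))"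
    by (rule norm_sum)
  also have "\<dots> \<le> (\<Sum>y\<in>UNIV. \<Sum>b\<in>UNIV. cmod (S y b * T b y))"
    by (rule sum_mono, rule norm_sum)
  also have "\<dots> \<le> (\<Sum>y\<in>UNIV. \<Sum>b\<in>UNIV. cmod (S y b))"
  proof (rule sum_mono, rule sum_mono)
    fix y b
    have "cmod (S y b) * cmod (T b y) \<le> cmod (S y b) * 1"
      by (rule mult_left_mono[OF e]) simp
    then show "cmod (S y b * T b y) \<le> cmod (S y b)" by (simp add: norm_mult)
  qed
  finally show "cmod (\<Sum>y\<in>UNIV. \<Sum>b\<in>UNIV. S y b * T b y) \<le> (\<Sum>y\<in>UNIV. \<Sum>b\<in>UNIV. cmod (S y b))" .
qed

lemma minl2_img: "minl2_S1_norm I Z = (SUP \<xi>\<in>{\<xi>. (\<Sum>s\<in>I. (cmod (\<xi> s))^2) \<le> 1}.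
     sqrt (\<Sum>r\<in>I. (trace_norm (\<lambda>y b. \<Sum>s\<in>I. \<xi> s * Z r s y b))^2))"
  unfolding minl2_S1_norm_def by (simp only: setcompr_eq_image)

lemma unit_coord:
  assumes "finite I" "(\<Sum>s\<in>I. (cmod (\<xi> s))^2) \<le> 1" "s \<in> I"
  shows "cmod (\<xi> s) \<le> 1"
proof -
  have "(cmod (\<xi> s))^2 \<le> (\<Sum>s\<in>I. (cmod (\<xi> s))^2)"
    by (rule member_le_sum) (use assms in auto)
  then have "(cmod (\<xi> s))^2 \<le> 1" using assms(2) by linarith
  then show ?thesis by (simp add: power_le_one_iff abs_square_le_1)
qed

lemma minl2_bdd:
  fixes Z :: "'i \<Rightarrow> 'i \<Rightarrow> 'y::finite \<Rightarrow> 'b::finite \<Rightarrow> complex"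
  assumes fin: "finite I"
  shows "bdd_above ((\<lambda>\<xi>. sqrt (\<Sum>r\<in>I. (trace_norm (\<lambda>y b. \<Sum>s\<in>I. \<xi> s * Z r s y b))^2)) ` {\<xi>. (\<Sum>s\<in>I. (cmod (\<xi> s))^2) \<le> 1})"
proof (rule bdd_aboveI2)
  fix \<xi> assume "\<xi> \<in> {\<xi>. (\<Sum>s\<in>I. (cmod (\<xi> s))^2) \<le> 1}"
  then have u: "s \<in> I \<Longrightarrow> cmod (\<xi> s) \<le> 1" for s using unit_coord[OF fin] by blast
  have "trace_norm (\<lambda>y b. \<Sum>s\<in>I. \<xi> s * Z r s y b) \<le> (\<Sum>y\<in>UNIV. \<Sum>b\<in>UNIV. \<Sum>s\<in>I. cmod (Z r s y b))" for r
  proof -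
    have "cmod (\<Sum>s\<in>I. \<xi> s * Z r s y b) \<le> (\<Sum>s\<in>I. cmod (Z r s y b))" for y b
    proof -
      have "cmod (\<Sum>s\<in>I. \<xi> s * Z r s y b) \<le> (\<Sum>s\<in>I. cmod (\<xi> s * Z r s y b))" by (rule norm_sum)
      also have "\<dots> \<le> (\<Sum>s\<in>I. cmod (Z r s y b))"
      proof (rule sum_mono)
        fix s assume "s \<in> I"
        then have "cmod (\<xi> s) * cmod (Z r s y b) \<le> 1 * cmod (Z r s y b)"
          using u by (intro mult_right_mono) auto
        then show "cmod (\<xi> s * Z r s y b) \<le> cmod (Z r s y b)" by (simp add: norm_mult)
      qed
      finally show ?thesis .
    qed
    then have "(\<Sum>y\<in>UNIV. \<Sum>b\<in>UNIV. cmod (\<Sum>s\<in>I. \<xi> s * Z r s y b)) \<le> (\<Sum>y\<in>UNIV. \<Sum>b\<in>UNIV. \<Sum>s\<in>I. cmod (Z r s y b))"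
      by (intro sum_mono) auto
    then show ?thesis using tn_le_l1[of "\<lambda>y b. \<Sum>s\<in>I. \<xi> s * Z r s y b"] by linarith
  qed
  then have "(trace_norm (\<lambda>y b. \<Sum>s\<in>I. \<xi> s * Z r s y b))^2 \<le> (\<Sum>y\<in>UNIV. \<Sum>b\<in>UNIV. \<Sum>s\<in>I. cmod (Z r s y b))^2" for r
    by (intro power_mono) (auto simp: tn_nonneg)
  then have "(\<Sum>r\<in>I. (trace_norm (\<lambda>y b. \<Sum>s\<in>I. \<xi> s * Z r s y b))^2) \<le> (\<Sum>r\<in>I. (\<Sum>y\<in>UNIV. \<Sum>b\<in>UNIV. \<Sum>s\<in>I. cmod (Z r s y b))^2)"
    by (intro sum_mono) auto
  then show "sqrt (\<Sum>r\<in>I. (trace_norm (\<lambda>y b. \<Sum>s\<in>I. \<xi> s * Z r s y b))^2) \<le> sqrt (\<Sum>r\<in>I. (\<Sum>y\<in>UNIV. \<Sum>b\<in>UNIV. \<Sum>s\<in>I. cmod (Z r s y b))^2)"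
    by simp
qed

lemma minl2_upper:
  fixes Z :: "'i \<Rightarrow> 'i \<Rightarrow> 'y::finite \<Rightarrow> 'b::finite \<Rightarrow> complex"
  assumes "finite I" "(\<Sum>s\<in>I. (cmod (\<xi> s))^2) \<le> 1"
  shows "sqrt (\<Sum>r\<in>I. (trace_norm (\<lambda>y b. \<Sum>s\<in>I. \<xi> s * Z r s y b))^2) \<le> minl2_S1_norm I Z"
  unfolding minl2_img by (rule cSUP_upper[OF _ minl2_bdd[OF assms(1)]]) (use assms(2) in simp)

lemma minl2_least:
  fixes Z :: "'i \<Rightarrow> 'i \<Rightarrow> 'y::finite \<Rightarrow> 'b::finite \<Rightarrow> complex"
  assumes "\<And>\<xi>. (\<Sum>s\<in>I. (cmod (\<xi> s))^2) \<le> 1 \<Longrightarrow> sqrt (\<Sum>r\<in>I. (trace_norm (\<lambda>y b. \<Sum>s\<in>I. \<xi> s * Z r s y b))^2) \<le> c"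
  shows "minl2_S1_norm I Z \<le> c"
  unfolding minl2_img
proof (rule cSUP_least)
  have "(\<lambda>_. 0) \<in> {\<xi>. (\<Sum>s\<in>I. (cmod (\<xi> s))^2) \<le> 1}" by simp
  then show "{\<xi>. (\<Sum>s\<in>I. (cmod (\<xi> s))^2) \<le> 1} \<noteq> {}" by (rule ex_in_conv[THEN iffD1, OF exI])
qed (use assms in simp)

lemma pi2C_upper:
  fixes \<omega> :: "nat \<Rightarrow> nat \<Rightarrow> 'x::finite \<Rightarrow> 'a::finite \<Rightarrow> 'y::finite \<Rightarrow> 'b::finite \<Rightarrow> complex"
    and T :: "nat \<Rightarrow> nat \<Rightarrow> 'a \<Rightarrow> 'x \<Rightarrow> complex"
  assumes "opnorm ({..<m} \<times> (UNIV::'a set)) ({..<m} \<times> (UNIV::'x set)) (\<lambda>(p,a) (q,x). T p q a x) \<le> 1"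
  shows "ereal (minl2_S1_norm ({..<m} \<times> {..<n})
       (\<lambda>(p,j) (q,k) y b. \<Sum>x\<in>UNIV. \<Sum>a\<in>UNIV. T p q a x * \<omega> j k x a y b)) \<le> pi2C n \<omega>"
proof -
  have mem: "(m, T) \<in> {(m, T :: nat \<Rightarrow> nat \<Rightarrow> 'a \<Rightarrow> 'x \<Rightarrow> complex).
        opnorm ({..<m} \<times> (UNIV::'a set)) ({..<m} \<times> (UNIV::'x set)) (\<lambda>(p,a) (q,x). T p q a x) \<le> 1}"
    using assms by simp
  show ?thesis
    unfolding pi2C_def
    using SUP_upper[OF mem, of "\<lambda>mT. ereal (minl2_S1_norm ({..<fst mT} \<times> {..<n})
       (\<lambda>(p,j) (q,k) y b. \<Sum>x\<in>UNIV. \<Sum>a\<in>UNIV. snd mT p q a x * \<omega> j k x a y b))"] by simp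
qed


lemma E1:
  fixes w :: "nat \<Rightarrow> 'x::finite \<Rightarrow> 'a::finite \<Rightarrow> 'y::finite \<Rightarrow> 'b::finite \<Rightarrow> complex"
  shows "(\<Sum>k<n. (\<Sum>x\<in>UNIV. \<Sum>a\<in>UNIV. \<Sum>y\<in>UNIV. \<Sum>b\<in>UNIV. w k x a y b * u a x * v b y) * \<xi> k)
       = (\<Sum>y\<in>UNIV. \<Sum>b\<in>UNIV. (\<Sum>k<n. \<xi> k * (\<Sum>x\<in>UNIV. \<Sum>a\<in>UNIV. u a x * w k x a y b)) * v b y)"
proof -
  have "(\<Sum>y\<in>UNIV. \<Sum>b\<in>UNIV. (\<Sum>k<n. \<xi> k * (\<Sum>x\<in>UNIV. \<Sum>a\<in>UNIV. u a x * w k x a y b)) * v b y)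
      = (\<Sum>y\<in>UNIV. \<Sum>b\<in>UNIV. \<Sum>k<n. \<Sum>x\<in>UNIV. \<Sum>a\<in>UNIV. \<xi> k * (w k x a y b * u a x * v b y))"
    by (simp add: sum_distrib_left sum_distrib_right mult_ac)
  also have "\<dots> = (\<Sum>k<n. \<Sum>y\<in>UNIV. \<Sum>b\<in>UNIV. \<Sum>x\<in>UNIV. \<Sum>a\<in>UNIV. \<xi> k * (w k x a y b * u a x * v b y))"
    by (simp add: sum.swap[of _ _ "{..<n}"])
  also have "\<dots> = (\<Sum>k<n. \<Sum>x\<in>UNIV. \<Sum>a\<in>UNIV. \<Sum>y\<in>UNIV. \<Sum>b\<in>UNIV. \<xi> k * (w k x a y b * u a x * v b y))"
  proof (rule sum.cong[OF refl])
    fix k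
    have "(\<Sum>y\<in>UNIV. \<Sum>b\<in>UNIV. \<Sum>x\<in>UNIV. \<Sum>a\<in>UNIV. \<xi> k * (w k x a y b * u a x * v b y))
        = (\<Sum>y\<in>UNIV. \<Sum>x\<in>UNIV. \<Sum>b\<in>UNIV. \<Sum>a\<in>UNIV. \<xi> k * (w k x a y b * u a x * v b y))"
      by (rule sum.cong[OF refl], rule sum.swap)
    also have "\<dots> = (\<Sum>x\<in>UNIV. \<Sum>y\<in>UNIV. \<Sum>b\<in>UNIV. \<Sum>a\<in>UNIV. \<xi> k * (w k x a y b * u a x * v b y))"
      by (rule sum.swap)
    also have "\<dots> = (\<Sum>x\<in>UNIV. \<Sum>y\<in>UNIV. \<Sum>a\<in>UNIV. \<Sum>b\<in>UNIV. \<xi> k * (w k x a y b * u a x * v b y))"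
      by (rule sum.cong[OF refl], rule sum.cong[OF refl], rule sum.swap)
    also have "\<dots> = (\<Sum>x\<in>UNIV. \<Sum>a\<in>UNIV. \<Sum>y\<in>UNIV. \<Sum>b\<in>UNIV. \<xi> k * (w k x a y b * u a x * v b y))"
      by (rule sum.cong[OF refl], rule sum.swap)
    finally show "(\<Sum>y\<in>UNIV. \<Sum>b\<in>UNIV. \<Sum>x\<in>UNIV. \<Sum>a\<in>UNIV. \<xi> k * (w k x a y b * u a x * v b y))
        = (\<Sum>x\<in>UNIV. \<Sum>a\<in>UNIV. \<Sum>y\<in>UNIV. \<Sum>b\<in>UNIV. \<xi> k * (w k x a y b * u a x * v b y))" .
  qed
  also have "\<dots> = (\<Sum>k<n. (\<Sum>x\<in>UNIV. \<Sum>a\<in>UNIV. \<Sum>y\<in>UNIV. \<Sum>b\<in>UNIV. w k x a y b * u a x * v b y) * \<xi> k)"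
    by (simp add: sum_distrib_left sum_distrib_right mult_ac)
  finally show ?thesis by simp
qed

lemma sum_pair: "(\<Sum>s\<in>A \<times> B. g s) = (\<Sum>a\<in>A. \<Sum>b\<in>B. g (a, b))"
  by (simp add: sum.cartesian_product)

lemma partA:
  fixes \<omega> :: "nat \<Rightarrow> nat \<Rightarrow> 'x::finite \<Rightarrow> 'a::finite \<Rightarrow> 'y::finite \<Rightarrow> 'b::finite \<Rightarrow> complex"
    and U :: "nat \<Rightarrow> 'a \<Rightarrow> nat \<Rightarrow> 'x \<Rightarrow> complex" and V :: "nat \<Rightarrow> 'b \<Rightarrow> nat \<Rightarrow> 'y \<Rightarrow> complex"
  assumes lw: "lowc m p q U V"
  shows "ereal (phiW_norm n m p q U V \<omega>) \<le> pi2C n \<omega>"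
proof -
  have U1: "\<And>x x'. (\<Sum>i<m. \<Sum>a\<in>UNIV. \<Sum>s<p i. cnj (U i a s x) * U i a s x') = (if x = x' then 1 else 0)"
    using lw unfolding lowc_def by blast
  have V1: "\<And>i y y'. i < m \<Longrightarrow> (\<Sum>b\<in>UNIV. \<Sum>t<q i. cnj (V i b t y) * V i b t y') = (if y = y' then 1 else 0)"
    using lw unfolding lowc_def by blast
  define P where "P = (\<Sum>i<m. p i)"
  have pP: "\<And>i. i < m \<Longrightarrow> p i \<le> P"
    unfolding P_def by (rule member_le_sum) auto
  define m' where "m' = Suc (m * P)"
  define valid where "valid r \<longleftrightarrow> r < m * P \<and> r mod P < p (r div P)" for r
  define T' :: "nat \<Rightarrow> nat \<Rightarrow> 'a \<Rightarrow> 'x \<Rightarrow> complex" where "T' r q' a x = (if q' = 0 \<and> valid r then U (r div P) a (r mod P) x else 0)" for r q' a x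
  have sumSuc: "(\<Sum>r<m'. if valid r then g r else 0) = (\<Sum>i<m. \<Sum>s<p i. g (i * P + s))" for g :: "nat \<Rightarrow> real"
  proof -
    have "(\<Sum>r<m'. if valid r then g r else 0) = (\<Sum>r<m*P. if valid r then g r else 0)"
      unfolding m'_def valid_def by simp
    also have "\<dots> = (\<Sum>r<m*P. if r mod P < p (r div P) then g (r div P * P + r mod P) else 0)"
      unfolding valid_def by (rule sum.cong) auto
    also have "\<dots> = (\<Sum>i<m. \<Sum>s<p i. g (i * P + s))"
      by (rule reindex_blocks[OF pP])
    finally show ?thesis .
  qed
  have validI: "valid (i * P + s)" "(i * P + s) div P = i" "(i * P + s) mod P = s" if "i < m" "s < p i" for i s
  proof -
    have sP: "s < P" using that pP by (meson less_le_trans)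
    have "i * P + s < Suc i * P" using sP by simp
    also have "\<dots> \<le> m * P" using that by (intro mult_le_mono1) simp
    finally have "i * P + s < m * P" .
    moreover show d: "(i * P + s) div P = i" using sP by simp
    moreover show md: "(i * P + s) mod P = s" using sP by simp
    ultimately show "valid (i * P + s)" unfolding valid_def using that by simp
  qed
  have contrT: "opnorm ({..<m'} \<times> (UNIV::'a set)) ({..<m'} \<times> (UNIV::'x set)) (\<lambda>(r,a) (q',x). T' r q' a x) \<le> 1"
    unfolding contraction_iff[OF finite_cartesian_product[OF finite_lessThan finite_UNIV] finite_cartesian_product[OF finite_lessThan finite_UNIV]]
  proof
    fix \<zeta> :: "nat \<times> 'x \<Rightarrow> complex"
    define F where "F i s = (\<Sum>a\<in>UNIV. (cmod (\<Sum>x\<in>UNIV. U i a s x * \<zeta> (0, x)))^2)" for i s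
    have inner: "(\<Sum>j\<in>{..<m'} \<times> UNIV. (case (r, a) of (r, a) \<Rightarrow> \<lambda>(q', x). T' r q' a x) j * \<zeta> j)
        = (if valid r then (\<Sum>x\<in>UNIV. U (r div P) a (r mod P) x * \<zeta> (0, x)) else 0)" for r a
    proof -
      have "(\<Sum>j\<in>{..<m'} \<times> UNIV. (case (r, a) of (r, a) \<Rightarrow> \<lambda>(q', x). T' r q' a x) j * \<zeta> j)
          = (\<Sum>q'<m'. \<Sum>x\<in>UNIV. T' r q' a x * \<zeta> (q', x))"
        by (simp add: sum.cartesian_product, rule sum.cong, auto split: prod.split)
      also have "\<dots> = (\<Sum>q'<m'. if q' = 0 then (\<Sum>x\<in>UNIV. T' r 0 a x * \<zeta> (0, x)) else 0)"
        by (rule sum.cong) (auto simp: T'_def)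
      also have "\<dots> = (\<Sum>x\<in>UNIV. T' r 0 a x * \<zeta> (0, x))"
        unfolding m'_def by simp
      finally show ?thesis unfolding T'_def by simp
    qed
    have "(\<Sum>i\<in>{..<m'} \<times> UNIV. (cmod (\<Sum>j\<in>{..<m'} \<times> UNIV. (case i of (r, a) \<Rightarrow> \<lambda>(q', x). T' r q' a x) j * \<zeta> j))^2)
        = (\<Sum>r<m'. \<Sum>a\<in>UNIV. (cmod (\<Sum>j\<in>{..<m'} \<times> UNIV. (case (r, a) of (r, a) \<Rightarrow> \<lambda>(q', x). T' r q' a x) j * \<zeta> j))^2)"
      by (simp add: sum.cartesian_product, rule sum.cong, auto split: prod.split)
    also have "\<dots> = (\<Sum>r<m'. if valid r then F (r div P) (r mod P) else 0)"
      unfolding inner F_def by (rule sum.cong) auto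
    also have "\<dots> = (\<Sum>i<m. \<Sum>s<p i. F ((i * P + s) div P) ((i * P + s) mod P))"
      by (rule sumSuc)
    also have "\<dots> = (\<Sum>i<m. \<Sum>s<p i. F i s)"
      using validI by (intro sum.cong) auto
    also have "\<dots> = (\<Sum>i<m. \<Sum>a\<in>UNIV. \<Sum>s<p i. (cmod (\<Sum>x\<in>UNIV. U i a s x * \<zeta> (0, x)))^2)"
      unfolding F_def by (intro sum.cong refl sum.swap)
    also have "\<dots> = (\<Sum>k\<in>Sigma {..<m} (\<lambda>i. UNIV \<times> {..<p i}). (cmod (\<Sum>x\<in>UNIV. U (fst k) (fst (snd k)) (snd (snd k)) x * \<zeta> (0, x)))^2)"
      by (rule sum_Sigma3[where f = "\<lambda>i a s. (cmod (\<Sum>x\<in>UNIV. U i a s x * \<zeta> (0, x)))^2", symmetric]) auto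
    also have "\<dots> = (\<Sum>x\<in>UNIV. (cmod (\<zeta> (0, x)))^2)"
    proof (rule iso_sum)
      fix x x'
      show "(\<Sum>k\<in>Sigma {..<m} (\<lambda>i. UNIV \<times> {..<p i}). cnj (U (fst k) (fst (snd k)) (snd (snd k)) x) * U (fst k) (fst (snd k)) (snd (snd k)) x') = (if x = x' then 1 else 0)"
        using U1[of x x'] sum_Sigma3[where f = "\<lambda>i a s. cnj (U i a s x) * U i a s x'" and A = "{..<m}" and B = UNIV and C = "\<lambda>i. {..<p i}"]
        by simp
    qed
    also have "\<dots> \<le> (\<Sum>q'<m'. \<Sum>x\<in>UNIV. (cmod (\<zeta> (q', x)))^2)"
      by (rule member_le_sum[where i = 0 and f = "\<lambda>q'. \<Sum>x\<in>UNIV. (cmod (\<zeta> (q', x)))^2"]) (auto simp: m'_def intro: sum_nonneg)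
    also have "\<dots> = (\<Sum>j\<in>{..<m'} \<times> UNIV. (cmod (\<zeta> j))^2)"
      by (simp add: sum.cartesian_product)
    finally show "(\<Sum>i\<in>{..<m'} \<times> UNIV. (cmod (\<Sum>j\<in>{..<m'} \<times> UNIV. (case i of (r, a) \<Rightarrow> \<lambda>(q', x). T' r q' a x) j * \<zeta> j))^2)
        \<le> (\<Sum>j\<in>{..<m'} \<times> UNIV. (cmod (\<zeta> j))^2)" .
  qed
  define I where "I = {..<m'} \<times> {..<n}"
  define Zf where "Zf = (\<lambda>(p,j) (q,k) y b. \<Sum>x\<in>UNIV. \<Sum>a\<in>UNIV. T' p q a x * \<omega> j k x a y b)"
  have main: "phiW_norm n m p q U V \<omega> \<le> minl2_S1_norm I Zf"
    unfolding phiW_norm_def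
  proof (rule opnorm_least)
    fix \<xi> :: "nat \<Rightarrow> complex" assume xi: "(\<Sum>j\<in>{..<n}. (cmod (\<xi> j))^2) \<le> 1"
    define S where "S j i s y b = (\<Sum>k<n. \<xi> k * (\<Sum>x\<in>UNIV. \<Sum>a\<in>UNIV. U i a s x * \<omega> j k x a y b))" for j i s y b
    define \<eta> where "\<eta> = (\<lambda>(q'::nat, k::nat). if q' = 0 then \<xi> k else 0)"
    have L: "(\<Sum>z\<in>{..<n} \<times> lowc_index m p q. (cmod (\<Sum>k\<in>{..<n}. (\<lambda>(j, i, s, t) k. \<Sum>x\<in>UNIV. \<Sum>a\<in>UNIV. \<Sum>y\<in>UNIV. \<Sum>b\<in>UNIV.
          \<omega> j k x a y b * U i a s x * V i b t y) z k * \<xi> k))^2)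
        = (\<Sum>j<n. \<Sum>i<m. \<Sum>s<p i. \<Sum>t<q i. (cmod (\<Sum>y\<in>UNIV. \<Sum>b\<in>UNIV. S j i s y b * V i b t y))^2)"
      unfolding sum_lowc S_def by (simp add: E1)
    also have "\<dots> \<le> (\<Sum>j<n. \<Sum>i<m. \<Sum>s<p i. (trace_norm (S j i s))^2)"
    proof (intro sum_mono)
      fix j i s assume "i \<in> {..<m}"
      then show "(\<Sum>t<q i. (cmod (\<Sum>y\<in>UNIV. \<Sum>b\<in>UNIV. S j i s y b * V i b t y))^2) \<le> (trace_norm (S j i s))^2"
        by (intro iso_tn V1) auto
    qed
    also have "\<dots> = (\<Sum>i<m. \<Sum>s<p i. \<Sum>j<n. (trace_norm (S j i s))^2)"
      by (simp add: sum.swap[of _ "{..<n}"])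
    also have "\<dots> = (\<Sum>z\<in>I. (trace_norm (\<lambda>y b. \<Sum>s\<in>I. \<eta> s * Zf z s y b))^2)"
    proof -
      have E2: "(\<lambda>y b. \<Sum>s\<in>I. \<eta> s * Zf (r, j) s y b) = (if valid r then S j (r div P) (r mod P) else (\<lambda>y b. 0))" for r j
      proof (intro ext)
        fix y b
        have "(\<Sum>s\<in>I. \<eta> s * Zf (r, j) s y b) = (\<Sum>q'<m'. \<Sum>k<n. \<eta> (q', k) * Zf (r, j) (q', k) y b)"
          unfolding I_def by (rule sum_pair)
        also have "\<dots> = (\<Sum>q'<m'. if q' = 0 then (\<Sum>k<n. \<xi> k * Zf (r, j) (0, k) y b) else 0)"
          by (rule sum.cong) (auto simp: \<eta>_def)
        also have "\<dots> = (\<Sum>k<n. \<xi> k * Zf (r, j) (0, k) y b)"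
          unfolding m'_def by simp
        also have "\<dots> = (if valid r then S j (r div P) (r mod P) y b else 0)"
          unfolding Zf_def T'_def S_def by simp
        finally show "(\<Sum>s\<in>I. \<eta> s * Zf (r, j) s y b) = (if valid r then S j (r div P) (r mod P) else (\<lambda>y b. 0)) y b"
          by simp
      qed
      have "(\<Sum>z\<in>I. (trace_norm (\<lambda>y b. \<Sum>s\<in>I. \<eta> s * Zf z s y b))^2)
          = (\<Sum>r<m'. \<Sum>j<n. (trace_norm (\<lambda>y b. \<Sum>s\<in>I. \<eta> s * Zf (r, j) s y b))^2)"
        unfolding I_def by (rule sum_pair)
      also have "\<dots> = (\<Sum>r<m'. if valid r then (\<Sum>j<n. (trace_norm (S j (r div P) (r mod P)))^2) else 0)"
        unfolding E2 by (rule sum.cong) (auto simp: tn_zero)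
      also have "\<dots> = (\<Sum>i<m. \<Sum>s<p i. \<Sum>j<n. (trace_norm (S j ((i * P + s) div P) ((i * P + s) mod P)))^2)"
        by (rule sumSuc)
      also have "\<dots> = (\<Sum>i<m. \<Sum>s<p i. \<Sum>j<n. (trace_norm (S j i s))^2)"
        using validI by (intro sum.cong) auto
      finally show ?thesis by simp
    qed
    finally have LE: "(\<Sum>z\<in>{..<n} \<times> lowc_index m p q. (cmod (\<Sum>k\<in>{..<n}. (\<lambda>(j, i, s, t) k. \<Sum>x\<in>UNIV. \<Sum>a\<in>UNIV. \<Sum>y\<in>UNIV. \<Sum>b\<in>UNIV.
          \<omega> j k x a y b * U i a s x * V i b t y) z k * \<xi> k))^2)
        \<le> (\<Sum>z\<in>I. (trace_norm (\<lambda>y b. \<Sum>s\<in>I. \<eta> s * Zf z s y b))^2)" .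
    have eta1: "(\<Sum>s\<in>I. (cmod (\<eta> s))^2) \<le> 1"
    proof -
      have "(\<Sum>s\<in>I. (cmod (\<eta> s))^2) = (\<Sum>q'<m'. \<Sum>k<n. (cmod (\<eta> (q', k)))^2)"
        unfolding I_def by (rule sum_pair)
      also have "\<dots> = (\<Sum>q'<m'. if q' = 0 then (\<Sum>k<n. (cmod (\<xi> k))^2) else 0)"
        by (rule sum.cong) (auto simp: \<eta>_def)
      also have "\<dots> = (\<Sum>k<n. (cmod (\<xi> k))^2)"
        unfolding m'_def by simp
      finally show ?thesis using xi by simp
    qed
    have "sqrt (\<Sum>z\<in>I. (trace_norm (\<lambda>y b. \<Sum>s\<in>I. \<eta> s * Zf z s y b))^2) \<le> minl2_S1_norm I Zf"
      by (rule minl2_upper[OF _ eta1]) (simp add: I_def)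
    then show "sqrt (\<Sum>z\<in>{..<n} \<times> lowc_index m p q. (cmod (\<Sum>k\<in>{..<n}. (\<lambda>(j, i, s, t) k. \<Sum>x\<in>UNIV. \<Sum>a\<in>UNIV. \<Sum>y\<in>UNIV. \<Sum>b\<in>UNIV.
          \<omega> j k x a y b * U i a s x * V i b t y) z k * \<xi> k))^2) \<le> minl2_S1_norm I Zf"
      using LE by (meson order_trans real_sqrt_le_mono)
  qed
  have "ereal (minl2_S1_norm I Zf) \<le> pi2C n \<omega>"
    unfolding I_def Zf_def by (rule pi2C_upper[OF contrT])
  then show ?thesis using main by (meson ereal_less_eq(3) order_trans)
qed


definition qf :: "('y::finite \<Rightarrow> 'y \<Rightarrow> complex) \<Rightarrow> ('y \<Rightarrow> complex) \<Rightarrow> complex" where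
  "qf D v = (\<Sum>y\<in>UNIV. \<Sum>y'\<in>UNIV. cnj (v y) * D y y' * v y')"

definition herm :: "('y::finite \<Rightarrow> 'y \<Rightarrow> complex) \<Rightarrow> bool" where
  "herm D \<longleftrightarrow> (\<forall>y y'. D y' y = cnj (D y y'))"

definition psd :: "('y::finite \<Rightarrow> 'y \<Rightarrow> complex) \<Rightarrow> bool" where
  "psd D \<longleftrightarrow> (\<forall>v. 0 \<le> Re (qf D v))"

lemma sum_if_const: "(\<Sum>x\<in>A. if P then f x else 0) = (if P then (\<Sum>x\<in>A. f x) else (0::'c::comm_monoid_add))"
  by simp

lemma qf_shift:
  fixes D :: "'y::finite \<Rightarrow> 'y \<Rightarrow> complex"
  assumes h: "herm D"
  shows "qf D (\<lambda>z. v z + (if z = y0 then c else 0))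
       = qf D v + cnj c * (\<Sum>z\<in>UNIV. D y0 z * v z) + c * cnj (\<Sum>z\<in>UNIV. D y0 z * v z) + cnj c * c * D y0 y0"
proof -
  have e: "cnj (v y + (if y = y0 then c else 0)) * D y y' * (v y' + (if y' = y0 then c else 0))
      = cnj (v y) * D y y' * v y' + (if y' = y0 then cnj (v y) * D y y0 * c else 0)
        + (if y = y0 then cnj c * D y0 y' * v y' else 0)
        + (if y = y0 then (if y' = y0 then cnj c * D y0 y0 * c else 0) else 0)" for y y'
    by (auto simp: algebra_simps)
  have "qf D (\<lambda>z. v z + (if z = y0 then c else 0))
      = qf D v + (\<Sum>y\<in>UNIV. cnj (v y) * D y y0 * c) + (\<Sum>y'\<in>UNIV. cnj c * D y0 y' * v y') + cnj c * D y0 y0 * c"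
    unfolding qf_def e by (simp add: sum.distrib sum_if_const)
  also have "(\<Sum>y\<in>UNIV. cnj (v y) * D y y0 * c) = c * cnj (\<Sum>z\<in>UNIV. D y0 z * v z)"
  proof -
    have "c * cnj (\<Sum>z\<in>UNIV. D y0 z * v z) = (\<Sum>y\<in>UNIV. cnj (v y) * cnj (D y0 y) * c)"
      by (simp add: sum_distrib_left mult_ac)
    also have "\<dots> = (\<Sum>y\<in>UNIV. cnj (v y) * D y y0 * c)"
    proof (rule sum.cong[OF refl])
      fix y
      have "D y y0 = cnj (D y0 y)" using h unfolding herm_def by blast
      then show "cnj (v y) * cnj (D y0 y) * c = cnj (v y) * D y y0 * c" by simp
    qed
    finally show ?thesis by simp
  qed
  also have "(\<Sum>y'\<in>UNIV. cnj c * D y0 y' * v y') = cnj c * (\<Sum>z\<in>UNIV. D y0 z * v z)"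
    by (simp add: sum_distrib_left mult_ac)
  finally show ?thesis by (simp add: mult_ac)
qed

lemma qf_zero: "qf D (\<lambda>_. 0) = 0"
  unfolding qf_def by simp

lemma qf_delta:
  assumes "herm D"
  shows "qf D (\<lambda>z. if z = y0 then 1 else 0) = D y0 y0"
  using qf_shift[OF assms, of "\<lambda>_. 0" y0 1] by (simp add: qf_zero)


lemma herm_real:
  assumes "herm D" shows "D y y = complex_of_real (Re (D y y))"
proof -
  have "D y y = cnj (D y y)" using assms unfolding herm_def by blast
  then show ?thesis by (simp add: complex_eq_iff)
qed

lemma psd_diag:
  assumes "herm D" "psd D" shows "0 \<le> Re (D y0 y0)"
  using assms(2) qf_delta[OF assms(1), of y0] unfolding psd_def by metis

lemma cnj_mult_self: "cnj g * g = complex_of_real ((cmod g)^2)"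
  by (subst complex_norm_square) (simp add: mult.commute)

lemma zero_row:
  fixes D :: "'y::finite \<Rightarrow> 'y \<Rightarrow> complex"
  assumes h: "herm D" and p: "psd D" and d0: "Re (D y0 y0) = 0"
  shows "D y0 y = 0"
proof (rule ccontr)
  define g where "g = D y0 y"
  assume "D y0 y \<noteq> 0"
  then have gpos: "(cmod g)^2 > 0" unfolding g_def by simp
  define v where "v = (\<lambda>z. if z = y then (1::complex) else 0)"
  have gv: "(\<Sum>z\<in>UNIV. D y0 z * v z) = g" unfolding v_def g_def by (simp add: if_distrib cong: if_cong)
  have D00: "D y0 y0 = 0" using herm_real[OF h, of y0] d0 by simp
  define R where "R = Re (qf D v)"
  define t where "t = (\<bar>R\<bar> + 1) / (2 * (cmod g)^2)"
  define c where "c = - (complex_of_real t * g)"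
  have e1: "cnj c * g = - complex_of_real (t * (cmod g)^2)"
  proof -
    have "cnj c * g = - (complex_of_real t * (cnj g * g))" unfolding c_def by (simp add: mult_ac)
    also have "cnj g * g = complex_of_real ((cmod g)^2)" by (rule cnj_mult_self)
    finally show ?thesis by (simp only: of_real_mult)
  qed
  have e2: "c * cnj g = - complex_of_real (t * (cmod g)^2)"
  proof -
    have "c * cnj g = - (complex_of_real t * (cnj g * g))" unfolding c_def by (simp add: mult_ac)
    also have "cnj g * g = complex_of_real ((cmod g)^2)" by (rule cnj_mult_self)
    finally show ?thesis by (simp only: of_real_mult)
  qed
  have "0 \<le> Re (qf D (\<lambda>z. v z + (if z = y0 then c else 0)))"
    using p unfolding psd_def by blast
  also have "Re (qf D (\<lambda>z. v z + (if z = y0 then c else 0))) = R - 2 * (t * (cmod g)^2)"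
    unfolding qf_shift[OF h] gv e1 e2 D00 R_def by simp
  also have "2 * (t * (cmod g)^2) = \<bar>R\<bar> + 1"
    unfolding t_def using gpos by simp
  finally show False by linarith
qed

lemma psd_factor_aux:
  fixes F :: "'y::finite set"
  assumes "finite F"
  shows "\<forall>D :: 'y \<Rightarrow> 'y \<Rightarrow> complex. herm D \<and> psd D \<and> (\<forall>y y'. y \<notin> F \<longrightarrow> D y y' = 0)
           \<longrightarrow> (\<exists>(k::nat) w. \<forall>y y'. D y y' = (\<Sum>t<k. cnj (w t y) * w t y'))"
  using assms
proof (induction F rule: finite_induct)
  case empty
  show ?case
  proof (intro allI impI)
    fix D :: "'y \<Rightarrow> 'y \<Rightarrow> complex" assume "herm D \<and> psd D \<and> (\<forall>y y'. y \<notin> {} \<longrightarrow> D y y' = 0)"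
    then have "\<forall>y y'. D y y' = (\<Sum>t<(0::nat). cnj ((\<lambda>(_::nat) (_::'y). 0::complex) t y) * (\<lambda>(_::nat) (_::'y). 0::complex) t y')" by simp
    then show "\<exists>(k::nat) w. \<forall>y y'. D y y' = (\<Sum>t<k. cnj (w t y) * w t y')" by (intro exI[of _ "0::nat"]) simp
  qed
next
  case (insert y0 F)
  show ?case
  proof (intro allI impI)
    fix D :: "'y \<Rightarrow> 'y \<Rightarrow> complex" assume H: "herm D \<and> psd D \<and> (\<forall>y y'. y \<notin> insert y0 F \<longrightarrow> D y y' = 0)"
    then have h: "herm D" and p: "psd D" and supp: "\<And>y y'. y \<notin> insert y0 F \<Longrightarrow> D y y' = 0" by auto
    have hD: "\<And>y y'. D y' y = cnj (D y y')" using h unfolding herm_def by blast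
    define d where "d = Re (D y0 y0)"
    have d0: "d \<ge> 0" unfolding d_def by (rule psd_diag[OF h p])
    have Dd: "D y0 y0 = complex_of_real d" unfolding d_def by (rule herm_real[OF h])
    show "\<exists>(k::nat) w. \<forall>y y'. D y y' = (\<Sum>t<k. cnj (w t y) * w t y')"
    proof (cases "d = 0")
      case True
      have row: "D y0 y = 0" for y by (rule zero_row[OF h p]) (use True d_def in simp)
      have "\<forall>y y'. y \<notin> F \<longrightarrow> D y y' = 0"
      proof (intro allI impI)
        fix y y' assume "y \<notin> F"
        then show "D y y' = 0" using row supp by (cases "y = y0") auto
      qed
      then show ?thesis using insert.IH h p by blast
    next
      case False
      then have dpos: "d > 0" using d0 by simp
      define w0 where "w0 y' = D y0 y' / complex_of_real (sqrt d)" for y'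
      define D' where "D' y y' = D y y' - cnj (w0 y) * w0 y'" for y y'
      have ww: "cnj (w0 y) * w0 y' = D y y0 * D y0 y' / complex_of_real d" for y y'
      proof -
        have "cnj (w0 y) * w0 y' = cnj (D y0 y) * D y0 y' / (complex_of_real (sqrt d) * complex_of_real (sqrt d))"
          unfolding w0_def by simp
        also have "complex_of_real (sqrt d) * complex_of_real (sqrt d) = complex_of_real d"
          using d0 by (simp flip: of_real_mult)
        also have "cnj (D y0 y) = D y y0" using hD[of y0 y] by simp
        finally show ?thesis .
      qed
      have hD': "herm D'"
        unfolding herm_def
      proof (intro allI)
        fix y y'
        show "D' y' y = cnj (D' y y')"
          unfolding D'_def ww using hD[of y y'] hD[of y0 y'] hD[of y y0] by (simp add: mult.commute)
      qed
      have pD': "psd D'"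
        unfolding psd_def
      proof
        fix v :: "'y \<Rightarrow> complex"
        define g where "g = (\<Sum>z\<in>UNIV. D y0 z * v z)"
        define c where "c = - g / complex_of_real d"
        have "qf D' v = qf D v - (\<Sum>y\<in>UNIV. \<Sum>y'\<in>UNIV. cnj (v y) * (D y y0 * D y0 y' / complex_of_real d) * v y')"
          unfolding qf_def D'_def ww by (simp add: algebra_simps sum_subtractf)
        also have "(\<Sum>y\<in>UNIV. \<Sum>y'\<in>UNIV. cnj (v y) * (D y y0 * D y0 y' / complex_of_real d) * v y')
            = (\<Sum>y\<in>UNIV. cnj (v y) * D y y0) * g / complex_of_real d"
          unfolding g_def by (simp add: sum_distrib_left sum_distrib_right sum_divide_distrib mult_ac)
        also have "(\<Sum>y\<in>UNIV. cnj (v y) * D y y0) = cnj g"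
          unfolding g_def by (simp, rule sum.cong[OF refl], simp add: hD[of y0] mult.commute)
        finally have q1: "qf D' v = qf D v - cnj g * g / complex_of_real d" .
        have q2: "qf D (\<lambda>z. v z + (if z = y0 then c else 0)) = qf D v - cnj g * g / complex_of_real d"
          unfolding qf_shift[OF h] g_def[symmetric] Dd c_def using dpos
          by (simp add: field_simps)
        have "0 \<le> Re (qf D (\<lambda>z. v z + (if z = y0 then c else 0)))" using p unfolding psd_def by blast
        then show "0 \<le> Re (qf D' v)" using q1 q2 by simp
      qed
      have sD': "\<forall>y y'. y \<notin> F \<longrightarrow> D' y y' = 0"
      proof (intro allI impI)
        fix y y' assume yF: "y \<notin> F"
        show "D' y y' = 0"
        proof (cases "y = y0")
          case True
          then show ?thesis using dpos by (simp add: D'_def ww Dd)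
        next
          case False
          then have "y \<notin> insert y0 F" using yF by simp
          then have "D y y' = 0" "D y y0 = 0" using supp by auto
          then show ?thesis unfolding D'_def ww by simp
        qed
      qed
      obtain k w where kw: "\<forall>y y'. D' y y' = (\<Sum>t<(k::nat). cnj (w t y) * w t y')"
        using insert.IH hD' pD' sD' by blast
      define w' where "w' t = (if t < k then w t else w0)" for t
      have "D y y' = (\<Sum>t<Suc k. cnj (w' t y) * w' t y')" for y y'
      proof -
        have "(\<Sum>t<Suc k. cnj (w' t y) * w' t y') = (\<Sum>t<k. cnj (w t y) * w t y') + cnj (w0 y) * w0 y'"
          unfolding w'_def by simp
        also have "\<dots> = D' y y' + cnj (w0 y) * w0 y'" using kw by simp
        finally show ?thesis unfolding D'_def by simp
      qed
      then show ?thesis by blast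
    qed
  qed
qed

lemma psd_factor:
  fixes D :: "'y::finite \<Rightarrow> 'y \<Rightarrow> complex"
  assumes "herm D" "psd D"
  shows "\<exists>(k::nat) w. \<forall>y y'. D y y' = (\<Sum>t<k. cnj (w t y) * w t y')"
  using psd_factor_aux[OF finite_UNIV] assms by blast


lemma contr_psd:
  fixes W :: "'k \<Rightarrow> 'x::finite \<Rightarrow> complex"
  assumes c: "\<And>\<zeta>. (\<Sum>k\<in>K. (cmod (\<Sum>x\<in>UNIV. W k x * \<zeta> x))^2) \<le> (\<Sum>x\<in>UNIV. (cmod (\<zeta> x))^2)"
  shows "herm (\<lambda>x x'. (if x = x' then 1 else 0) - (\<Sum>k\<in>K. cnj (W k x) * W k x'))"
    and "psd (\<lambda>x x'. (if x = x' then 1 else 0) - (\<Sum>k\<in>K. cnj (W k x) * W k x'))"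
proof -
  show "herm (\<lambda>x x'. (if x = x' then 1 else 0) - (\<Sum>k\<in>K. cnj (W k x) * W k x'))"
    unfolding herm_def by (simp add: mult.commute)
  show "psd (\<lambda>x x'. (if x = x' then 1 else 0) - (\<Sum>k\<in>K. cnj (W k x) * W k x'))"
    unfolding psd_def
  proof
    fix v :: "'x \<Rightarrow> complex"
    have "qf (\<lambda>x x'. (if x = x' then 1 else 0) - (\<Sum>k\<in>K. cnj (W k x) * W k x')) v
        = (\<Sum>x\<in>UNIV. \<Sum>x'\<in>UNIV. cnj (v x) * (if x = x' then 1 else 0) * v x')
          - (\<Sum>x\<in>UNIV. \<Sum>x'\<in>UNIV. cnj (v x) * (\<Sum>k\<in>K. cnj (W k x) * W k x') * v x')"
      unfolding qf_def by (simp add: algebra_simps sum_subtractf)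
    also have "(\<Sum>x\<in>UNIV. \<Sum>x'\<in>UNIV. cnj (v x) * (if x = x' then 1 else 0) * v x') = complex_of_real (\<Sum>x\<in>UNIV. (cmod (v x))^2)"
      unfolding norm_sq_of_real by (simp add: mult_delta sum.delta sum.delta')
    also have "(\<Sum>x\<in>UNIV. \<Sum>x'\<in>UNIV. cnj (v x) * (\<Sum>k\<in>K. cnj (W k x) * W k x') * v x') = complex_of_real (\<Sum>k\<in>K. (cmod (\<Sum>x\<in>UNIV. W k x * v x))^2)"
      by (rule gram[symmetric])
    finally show "0 \<le> Re (qf (\<lambda>x x'. (if x = x' then 1 else 0) - (\<Sum>k\<in>K. cnj (W k x) * W k x')) v)"
      using c[of v] by simp
  qed
qed

lemma finite_lowc_index: "finite (lowc_index m p q)"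
  unfolding lowc_index_Sigma by auto

lemma O_upper:
  fixes \<omega> :: "nat \<Rightarrow> nat \<Rightarrow> 'x::finite \<Rightarrow> 'a::finite \<Rightarrow> 'y::finite \<Rightarrow> 'b::finite \<Rightarrow> complex"
    and U :: "nat \<Rightarrow> 'a \<Rightarrow> nat \<Rightarrow> 'x \<Rightarrow> complex" and V :: "nat \<Rightarrow> 'b \<Rightarrow> nat \<Rightarrow> 'y \<Rightarrow> complex"
  assumes "lowc m p q U V"
  shows "ereal (phiW_norm n m p q U V \<omega>) \<le> O_lowc_norm n \<omega>"
proof -
  have mem: "(m, p, q, U, V) \<in> {(m, p, q, U :: nat \<Rightarrow> 'a \<Rightarrow> nat \<Rightarrow> 'x \<Rightarrow> complex,
                                 V :: nat \<Rightarrow> 'b \<Rightarrow> nat \<Rightarrow> 'y \<Rightarrow> complex). lowc m p q U V}"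
    using assms by simp
  show ?thesis
    unfolding O_lowc_norm_def
    using SUP_upper[OF mem, of "\<lambda>W. case W of (m, p, q, U, V) \<Rightarrow> ereal (phiW_norm n m p q U V \<omega>)"] by simp
qed

lemma ereal_sup_le:
  assumes up: "\<And>\<eta>. P \<eta> \<Longrightarrow> ereal (f \<eta>) \<le> Ob"
    and ex: "P \<eta>0"
    and least: "\<And>c. (\<And>\<eta>. P \<eta> \<Longrightarrow> f \<eta> \<le> c) \<Longrightarrow> S \<le> c"
  shows "ereal S \<le> Ob"
proof (cases Ob)
  case (real r)
  have "S \<le> r" by (rule least) (use up real in force)
  then show ?thesis using real by simp
next
  case PInf then show ?thesis by simp
next
  case MInf then show ?thesis using up[OF ex] by simp
qed

lemma ereal_approx_le:
  assumes "\<And>z. 0 < z \<Longrightarrow> z < 1 \<Longrightarrow> ereal (z * x) \<le> Ob"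
  shows "ereal x \<le> Ob"
proof (cases Ob)
  case (real r)
  have "x \<le> r" by (rule field_le_mult_one_interval) (use assms real in force)
  then show ?thesis using real by simp
next
  case PInf then show ?thesis by simp
next
  case MInf then show ?thesis using assms[of "1/2"] by simp
qed


lemma partB_core:
  fixes \<omega> :: "nat \<Rightarrow> nat \<Rightarrow> 'x::finite \<Rightarrow> 'a::finite \<Rightarrow> 'y::finite \<Rightarrow> 'b::finite \<Rightarrow> complex"
    and R :: "nat \<Rightarrow> 'a \<Rightarrow> 'x \<Rightarrow> complex" and Vc :: "nat \<Rightarrow> 'b \<Rightarrow> 'y \<Rightarrow> complex"
  assumes Rc: "\<And>\<zeta>. (\<Sum>k\<in>{..<m} \<times> UNIV. (cmod (\<Sum>x\<in>UNIV. R (fst k) (snd k) x * \<zeta> x))^2) \<le> (\<Sum>x\<in>UNIV. (cmod (\<zeta> x))^2)"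
    and Vcc: "\<And>r. opnorm (UNIV::'b set) (UNIV::'y set) (Vc r) \<le> 1"
  shows "ereal (sqrt (\<Sum>r<m. (cmod (\<Sum>y\<in>UNIV. \<Sum>b\<in>UNIV. (\<Sum>x\<in>UNIV. \<Sum>a\<in>UNIV. R r a x * \<omega> 0 0 x a y b) * Vc r b y))^2))
         \<le> O_lowc_norm 1 \<omega>"
proof -
  define G where "G x x' = (\<Sum>k\<in>{..<m} \<times> UNIV. cnj (R (fst k) (snd k) x) * R (fst k) (snd k) x')" for x x'
  define DU where "DU x x' = (if x = x' then 1 else 0) - G x x'" for x x'
  have "herm DU" "psd DU" unfolding DU_def G_def by (rule contr_psd[OF Rc])+
  then obtain kU u where ku: "\<forall>x x'. DU x x' = (\<Sum>t<(kU::nat). cnj (u t x) * u t x')"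
    using psd_factor by blast
  define DV where "DV r y y' = (if y = y' then 1 else 0) - (\<Sum>b\<in>UNIV. cnj (Vc r b y) * Vc r b y')" for r y y'
  have "\<forall>r. \<exists>(k::nat) w. \<forall>y y'. DV r y y' = (\<Sum>t<k. cnj (w t y) * w t y')"
  proof
    fix r
    have c: "\<And>\<zeta>. (\<Sum>b\<in>UNIV. (cmod (\<Sum>y\<in>UNIV. Vc r b y * \<zeta> y))^2) \<le> (\<Sum>y\<in>UNIV. (cmod (\<zeta> y))^2)"
      using Vcc[of r] contraction_iff[OF finite_UNIV finite_UNIV, of "Vc r"] by blast
    have "herm (DV r)" "psd (DV r)" unfolding DV_def by (rule contr_psd[OF c])+
    then show "\<exists>(k::nat) w. \<forall>y y'. DV r y y' = (\<Sum>t<k. cnj (w t y) * w t y')" using psd_factor by blast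
  qed
  then obtain kV wv where kv: "\<And>r y y'. DV r y y' = (\<Sum>t<(kV r::nat). cnj (wv r t y) * wv r t y')"
    by metis
  define DI where "DI y y' = (if y = y' then 1 else 0) - (\<Sum>k\<in>({}::nat set). cnj ((\<lambda>_ _. 0::complex) k y) * (\<lambda>_ _. 0) k y')" for y y' :: 'y
  have "herm DI" unfolding DI_def by (rule contr_psd(1)) (simp add: sum_nonneg)
  moreover have "psd DI" unfolding DI_def by (rule contr_psd(2)) (simp add: sum_nonneg)
  ultimately obtain kI wI where ki: "\<forall>y y'. DI y y' = (\<Sum>t<(kI::nat). cnj (wI t y) * wI t y')"
    using psd_factor by blast
  define a0 :: 'a where "a0 = undefined"
  define b0 :: 'b where "b0 = undefined"
  define pW where "pW i = (if i < m then 1 else kU)" for i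
  define qW where "qW i = (if i < m then Suc (kV i) else kI)" for i
  define UW where "UW i a s x = (if i < m then R i a x else if a = a0 then u s x else 0)" for i a s x
  define VW where "VW i b t y = (if i < m then (if t = 0 then Vc i b y else if b = b0 then wv i (t - 1) y else 0)
                                 else (if b = b0 then wI t y else 0))" for i b t y
  have lw: "lowc (Suc m) pW qW UW VW"
    unfolding lowc_def
  proof (intro conjI allI impI)
    fix x x'
    have A: "(\<Sum>i<m. \<Sum>a\<in>UNIV. \<Sum>s<pW i. cnj (UW i a s x) * UW i a s x') = G x x'"
    proof -
      have "(\<Sum>i<m. \<Sum>a\<in>UNIV. \<Sum>s<pW i. cnj (UW i a s x) * UW i a s x') = (\<Sum>i<m. \<Sum>a\<in>UNIV. cnj (R i a x) * R i a x')"
        by (intro sum.cong refl) (simp add: pW_def UW_def)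
      also have "\<dots> = G x x'" unfolding G_def by (rule sum_fst_snd[symmetric])
      finally show ?thesis .
    qed
    have B: "(\<Sum>a\<in>UNIV. \<Sum>s<pW m. cnj (UW m a s x) * UW m a s x') = DU x x'"
    proof -
      have "(\<Sum>a\<in>UNIV. \<Sum>s<pW m. cnj (UW m a s x) * UW m a s x')
          = (\<Sum>a\<in>UNIV. if a = a0 then (\<Sum>s<kU. cnj (u s x) * u s x') else 0)"
        by (intro sum.cong refl) (simp add: pW_def UW_def)
      also have "\<dots> = DU x x'" using ku by simp
      finally show ?thesis .
    qed
    show "(\<Sum>i<Suc m. \<Sum>a\<in>UNIV. \<Sum>s<pW i. cnj (UW i a s x) * UW i a s x') = (if x = x' then 1 else 0)"
      using A B by (simp add: DU_def)
  next
    fix i y y' assume i: "i < Suc m"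
    show "(\<Sum>b\<in>UNIV. \<Sum>t<qW i. cnj (VW i b t y) * VW i b t y') = (if y = y' then 1 else 0)"
    proof (cases "i < m")
      case True
      have "(\<Sum>b\<in>UNIV. \<Sum>t<qW i. cnj (VW i b t y) * VW i b t y')
          = (\<Sum>b\<in>UNIV. cnj (Vc i b y) * Vc i b y' + (\<Sum>t<kV i. if b = b0 then cnj (wv i t y) * wv i t y' else 0))"
      proof (rule sum.cong[OF refl])
        fix b :: 'b
        show "(\<Sum>t<qW i. cnj (VW i b t y) * VW i b t y')
          = cnj (Vc i b y) * Vc i b y' + (\<Sum>t<kV i. if b = b0 then cnj (wv i t y) * wv i t y' else 0)"
          by (simp only: qW_def True if_True sum.lessThan_Suc_shift) (cases "b = b0"; simp add: VW_def True)
      qed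
      also have "\<dots> = (\<Sum>b\<in>UNIV. cnj (Vc i b y) * Vc i b y') + (\<Sum>t<kV i. cnj (wv i t y) * wv i t y')"
        by (simp add: sum.distrib sum_if_const)
      also have "\<dots> = (if y = y' then 1 else 0)"
        using kv[of i y y', symmetric] unfolding DV_def by simp
      finally show ?thesis .
    next
      case False
      then have im: "i = m" using i by simp
      have "(\<Sum>b\<in>UNIV. \<Sum>t<qW i. cnj (VW i b t y) * VW i b t y')
          = (\<Sum>b\<in>UNIV. if b = b0 then (\<Sum>t<kI. cnj (wI t y) * wI t y') else 0)"
        by (intro sum.cong refl) (simp add: qW_def VW_def im)
      also have "\<dots> = (if y = y' then 1 else 0)"
        using ki by (simp add: DI_def)
      finally show ?thesis .
    qed
  qed
  have bound: "sqrt (\<Sum>r<m. (cmod (\<Sum>y\<in>UNIV. \<Sum>b\<in>UNIV. (\<Sum>x\<in>UNIV. \<Sum>a\<in>UNIV. R r a x * \<omega> 0 0 x a y b) * Vc r b y))^2)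
         \<le> phiW_norm 1 (Suc m) pW qW UW VW \<omega>"
  proof -
    define M where "M = (\<lambda>(j, i, s, t) k. \<Sum>x\<in>UNIV. \<Sum>a\<in>UNIV. \<Sum>y\<in>UNIV. \<Sum>b\<in>UNIV.
          \<omega> j k x a y b * UW i a s x * VW i b t y)"
    define g where "g z = (cmod (\<Sum>k\<in>{..<1::nat}. M z k * 1))^2" for z
    have up: "sqrt (\<Sum>z\<in>{..<1} \<times> lowc_index (Suc m) pW qW. g z) \<le> phiW_norm 1 (Suc m) pW qW UW VW \<omega>"
      unfolding phiW_norm_def g_def M_def
      by (rule opnorm_upper[where \<xi> = "\<lambda>_. 1"]) (auto simp: finite_lowc_index)
    have g0: "g (0, i, 0, 0) = (cmod (\<Sum>y\<in>UNIV. \<Sum>b\<in>UNIV. (\<Sum>x\<in>UNIV. \<Sum>a\<in>UNIV. R i a x * \<omega> 0 0 x a y b) * Vc i b y))^2"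
      if i: "i < m" for i
    proof -
      have "(\<Sum>k\<in>{..<1::nat}. M (0, i, 0, 0) k * 1)
          = (\<Sum>k<1. (\<Sum>x\<in>UNIV. \<Sum>a\<in>UNIV. \<Sum>y\<in>UNIV. \<Sum>b\<in>UNIV. \<omega> 0 k x a y b * R i a x * Vc i b y) * (\<lambda>_. 1) k)"
        unfolding M_def using i by (simp add: UW_def VW_def)
      also have "\<dots> = (\<Sum>y\<in>UNIV. \<Sum>b\<in>UNIV. (\<Sum>k<1. (\<lambda>_. 1) k * (\<Sum>x\<in>UNIV. \<Sum>a\<in>UNIV. R i a x * \<omega> 0 k x a y b)) * Vc i b y)"
        by (rule E1)
      also have "\<dots> = (\<Sum>y\<in>UNIV. \<Sum>b\<in>UNIV. (\<Sum>x\<in>UNIV. \<Sum>a\<in>UNIV. R i a x * \<omega> 0 0 x a y b) * Vc i b y)"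
        by simp
      finally show ?thesis unfolding g_def by simp
    qed
    have gnn: "g z \<ge> 0" for z unfolding g_def by simp
    have h1: "(\<Sum>z\<in>{..<1} \<times> lowc_index (Suc m) pW qW. g z) = (\<Sum>i<Suc m. \<Sum>s<pW i. \<Sum>t<qW i. g (0, i, s, t))"
      unfolding sum_lowc by simp
    have h2: "(\<Sum>i<m. \<Sum>s<pW i. \<Sum>t<qW i. g (0, i, s, t)) \<le> (\<Sum>i<Suc m. \<Sum>s<pW i. \<Sum>t<qW i. g (0, i, s, t))"
      by (simp add: sum_nonneg gnn)
    have h3: "(\<Sum>i<m. g (0, i, 0, 0)) \<le> (\<Sum>i<m. \<Sum>s<pW i. \<Sum>t<qW i. g (0, i, s, t))"
    proof (rule sum_mono)
      fix i assume "i \<in> {..<m}"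
      then have i: "i < m" by simp
      have "(\<Sum>s<pW i. \<Sum>t<qW i. g (0, i, s, t)) = (\<Sum>t<qW i. g (0, i, 0, t))"
        using i by (simp add: pW_def)
      moreover have "g (0, i, 0, 0) \<le> (\<Sum>t<qW i. g (0, i, 0, t))"
        by (rule member_le_sum[where f = "\<lambda>t. g (0, i, 0, t)"]) (use i in \<open>auto simp: qW_def gnn\<close>)
      ultimately show "g (0, i, 0, 0) \<le> (\<Sum>s<pW i. \<Sum>t<qW i. g (0, i, s, t))" by simp
    qed
    have "(\<Sum>i<m. g (0, i, 0, 0)) \<le> (\<Sum>z\<in>{..<1} \<times> lowc_index (Suc m) pW qW. g z)"
      using h1 h2 h3 by linarith
    moreover have "(\<Sum>i<m. g (0, i, 0, 0)) = (\<Sum>r<m. (cmod (\<Sum>y\<in>UNIV. \<Sum>b\<in>UNIV. (\<Sum>x\<in>UNIV. \<Sum>a\<in>UNIV. R r a x * \<omega> 0 0 x a y b) * Vc r b y))^2)"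
      using g0 by simp
    ultimately have "(\<Sum>r<m. (cmod (\<Sum>y\<in>UNIV. \<Sum>b\<in>UNIV. (\<Sum>x\<in>UNIV. \<Sum>a\<in>UNIV. R r a x * \<omega> 0 0 x a y b) * Vc r b y))^2)
        \<le> (\<Sum>z\<in>{..<1} \<times> lowc_index (Suc m) pW qW. g z)" by linarith
    then have "sqrt (\<Sum>r<m. (cmod (\<Sum>y\<in>UNIV. \<Sum>b\<in>UNIV. (\<Sum>x\<in>UNIV. \<Sum>a\<in>UNIV. R r a x * \<omega> 0 0 x a y b) * Vc r b y))^2)
        \<le> sqrt (\<Sum>z\<in>{..<1} \<times> lowc_index (Suc m) pW qW. g z)" by (rule real_sqrt_le_mono)
    then show ?thesis using up by (rule order_trans)
  qed
  show ?thesis using bound O_upper[OF lw, of 1 \<omega>] by (meson ereal_less_eq(3) order_trans)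
qed


lemma O_le_pi2C:
  fixes \<omega> :: "nat \<Rightarrow> nat \<Rightarrow> 'x::finite \<Rightarrow> 'a::finite \<Rightarrow> 'y::finite \<Rightarrow> 'b::finite \<Rightarrow> complex"
  shows "O_lowc_norm n \<omega> \<le> pi2C n \<omega>"
  unfolding O_lowc_norm_def
proof (rule SUP_least)
  fix W assume "W \<in> {(m, p, q, U :: nat \<Rightarrow> 'a \<Rightarrow> nat \<Rightarrow> 'x \<Rightarrow> complex,
                                 V :: nat \<Rightarrow> 'b \<Rightarrow> nat \<Rightarrow> 'y \<Rightarrow> complex). lowc m p q U V}"
  then obtain m p q U V where W: "W = (m, p, q, U, V)" and lw: "lowc m p q U V" by blast
  show "(case W of (m, p, q, U, V) \<Rightarrow> ereal (phiW_norm n m p q U V \<omega>)) \<le> pi2C n \<omega>"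
    using partA[OF lw, of n \<omega>] W by simp
qed

lemma partB:
  fixes \<omega> :: "nat \<Rightarrow> nat \<Rightarrow> 'x::finite \<Rightarrow> 'a::finite \<Rightarrow> 'y::finite \<Rightarrow> 'b::finite \<Rightarrow> complex"
  shows "pi2C 1 \<omega> \<le> O_lowc_norm 1 \<omega>"
  unfolding pi2C_def
proof (rule SUP_least)
  fix mT assume "mT \<in> {(m, T :: nat \<Rightarrow> nat \<Rightarrow> 'a \<Rightarrow> 'x \<Rightarrow> complex).
        opnorm ({..<m} \<times> (UNIV::'a set)) ({..<m} \<times> (UNIV::'x set)) (\<lambda>(p,a) (q,x). T p q a x) \<le> 1}"
  then obtain m T where mT: "mT = (m, T)"
    and cT: "opnorm ({..<m} \<times> (UNIV::'a set)) ({..<m} \<times> (UNIV::'x set)) (\<lambda>(p,a) (q,x). T p q a x) \<le> 1"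
    by blast
  define I where "I = {..<m} \<times> {..<(1::nat)}"
  define Zf where "Zf = (\<lambda>(p::nat, j::nat) (q::nat, k::nat) (y::'y) (b::'b). \<Sum>x\<in>UNIV. \<Sum>a\<in>UNIV. T p q a x * \<omega> j k x a y b)"
  have "ereal (minl2_S1_norm I Zf) \<le> O_lowc_norm 1 \<omega>"
  proof -
  have up: "ereal (sqrt (\<Sum>r\<in>I. (trace_norm (\<lambda>y b. \<Sum>s\<in>I. \<eta> s * Zf r s y b))^2)) \<le> O_lowc_norm 1 \<omega>"
    if eta: "(\<Sum>s\<in>I. (cmod (\<eta> s))^2) \<le> 1" for \<eta> :: "nat \<times> nat \<Rightarrow> complex"
  proof -
    define S where "S = (\<lambda>r y b. \<Sum>s\<in>I. \<eta> s * Zf (r, 0) s y b)"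
    define R where "R r a x = (\<Sum>q<m. \<eta> (q, 0) * T r q a x)" for r a x
    have SR: "S r y b = (\<Sum>x\<in>UNIV. \<Sum>a\<in>UNIV. R r a x * \<omega> 0 0 x a y b)" for r y b
    proof -
      have "S r y b = (\<Sum>q<m. \<eta> (q, 0) * (\<Sum>x\<in>UNIV. \<Sum>a\<in>UNIV. T r q a x * \<omega> 0 0 x a y b))"
        unfolding S_def I_def sum_pair Zf_def by simp
      also have "\<dots> = (\<Sum>q<m. \<Sum>x\<in>UNIV. \<Sum>a\<in>UNIV. \<eta> (q, 0) * T r q a x * \<omega> 0 0 x a y b)"
        by (simp add: sum_distrib_left mult_ac)
      also have "\<dots> = (\<Sum>x\<in>UNIV. \<Sum>q<m. \<Sum>a\<in>UNIV. \<eta> (q, 0) * T r q a x * \<omega> 0 0 x a y b)"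
        by (rule sum.swap)
      also have "\<dots> = (\<Sum>x\<in>UNIV. \<Sum>a\<in>UNIV. \<Sum>q<m. \<eta> (q, 0) * T r q a x * \<omega> 0 0 x a y b)"
        by (intro sum.cong refl sum.swap)
      also have "\<dots> = (\<Sum>x\<in>UNIV. \<Sum>a\<in>UNIV. R r a x * \<omega> 0 0 x a y b)"
        unfolding R_def by (simp add: sum_distrib_right)
      finally show ?thesis .
    qed
    have sumI: "(\<Sum>r\<in>I. (trace_norm (\<lambda>y b. \<Sum>s\<in>I. \<eta> s * Zf r s y b))^2) = (\<Sum>r<m. (trace_norm (S r))^2)"
      unfolding S_def by (simp add: I_def sum_pair)
    have eta2: "(\<Sum>q<m. (cmod (\<eta> (q, 0)))^2) \<le> 1"
      using eta unfolding I_def sum_pair by simp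
    have Rc: "(\<Sum>k\<in>{..<m} \<times> UNIV. (cmod (\<Sum>x\<in>UNIV. R (fst k) (snd k) x * \<zeta> x))^2) \<le> (\<Sum>x\<in>UNIV. (cmod (\<zeta> x))^2)" for \<zeta>
    proof -
      define \<xi> where "\<xi> = (\<lambda>(q, x). \<eta> (q, 0) * \<zeta> x)"
      have fin: "finite ({..<m} \<times> (UNIV::'a set))" "finite ({..<m} \<times> (UNIV::'x set))" by auto
      have c: "(\<Sum>i\<in>{..<m} \<times> UNIV. (cmod (\<Sum>j\<in>{..<m} \<times> UNIV. (\<lambda>(p,a) (q,x). T p q a x) i j * \<xi> j))^2)
          \<le> (\<Sum>j\<in>{..<m} \<times> UNIV. (cmod (\<xi> j))^2)"
        using cT contraction_iff[OF fin(1) fin(2)] by blast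
      have inner: "(\<Sum>j\<in>{..<m} \<times> UNIV. (\<lambda>(p,a) (q,x). T p q a x) (r, a) j * \<xi> j) = (\<Sum>x\<in>UNIV. R r a x * \<zeta> x)" for r a
      proof -
        have "(\<Sum>j\<in>{..<m} \<times> UNIV. (\<lambda>(p,a) (q,x). T p q a x) (r, a) j * \<xi> j)
            = (\<Sum>q<m. \<Sum>x\<in>UNIV. T r q a x * (\<eta> (q, 0) * \<zeta> x))"
          unfolding sum_pair \<xi>_def by simp
        also have "\<dots> = (\<Sum>x\<in>UNIV. \<Sum>q<m. T r q a x * (\<eta> (q, 0) * \<zeta> x))"
          by (rule sum.swap)
        also have "\<dots> = (\<Sum>x\<in>UNIV. R r a x * \<zeta> x)"
          unfolding R_def by (simp add: sum_distrib_left sum_distrib_right mult_ac)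
        finally show ?thesis .
      qed
      have "(\<Sum>k\<in>{..<m} \<times> UNIV. (cmod (\<Sum>x\<in>UNIV. R (fst k) (snd k) x * \<zeta> x))^2)
          = (\<Sum>i\<in>{..<m} \<times> UNIV. (cmod (\<Sum>j\<in>{..<m} \<times> UNIV. (\<lambda>(p,a) (q,x). T p q a x) i j * \<xi> j))^2)"
        unfolding sum_fst_snd[where f = "\<lambda>r a. (cmod (\<Sum>x\<in>UNIV. R r a x * \<zeta> x))^2"]
        unfolding sum_pair[where g = "\<lambda>i. (cmod (\<Sum>j\<in>{..<m} \<times> UNIV. (\<lambda>(p,a) (q,x). T p q a x) i j * \<xi> j))^2"]
        unfolding inner ..
      also have "\<dots> \<le> (\<Sum>j\<in>{..<m} \<times> UNIV. (cmod (\<xi> j))^2)" by (rule c)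
      also have "\<dots> = (\<Sum>q<m. (cmod (\<eta> (q, 0)))^2) * (\<Sum>x\<in>UNIV. (cmod (\<zeta> x))^2)"
      proof -
        have "(\<Sum>j\<in>{..<m} \<times> UNIV. (cmod (\<xi> j))^2) = (\<Sum>q<m. \<Sum>x\<in>UNIV. (cmod (\<eta> (q, 0)))^2 * (cmod (\<zeta> x))^2)"
          unfolding sum_pair \<xi>_def by (simp add: norm_mult power_mult_distrib)
        also have "\<dots> = (\<Sum>q<m. (cmod (\<eta> (q, 0)))^2) * (\<Sum>x\<in>UNIV. (cmod (\<zeta> x))^2)"
          by (rule sum_product[symmetric])
        finally show ?thesis .
      qed
      also have "\<dots> \<le> 1 * (\<Sum>x\<in>UNIV. (cmod (\<zeta> x))^2)"
        by (rule mult_right_mono[OF eta2]) (simp add: sum_nonneg)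
      finally show ?thesis by simp
    qed
    show "ereal (sqrt (\<Sum>r\<in>I. (trace_norm (\<lambda>y b. \<Sum>s\<in>I. \<eta> s * Zf r s y b))^2)) \<le> O_lowc_norm 1 \<omega>"
    proof (rule ereal_approx_le)
      fix z :: real assume z: "0 < z" "z < 1"
      have "\<forall>r. \<exists>V. opnorm (UNIV::'b set) (UNIV::'y set) V \<le> 1 \<and> z * trace_norm (S r) \<le> cmod (\<Sum>y\<in>UNIV. \<Sum>b\<in>UNIV. S r y b * V b y)"
        using tn_approx[OF z(2)] by blast
      then obtain Vc where Vc: "\<And>r. opnorm (UNIV::'b set) (UNIV::'y set) (Vc r) \<le> 1"
        and Vz: "\<And>r. z * trace_norm (S r) \<le> cmod (\<Sum>y\<in>UNIV. \<Sum>b\<in>UNIV. S r y b * Vc r b y)"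
        by metis
      have core: "ereal (sqrt (\<Sum>r<m. (cmod (\<Sum>y\<in>UNIV. \<Sum>b\<in>UNIV. (\<Sum>x\<in>UNIV. \<Sum>a\<in>UNIV. R r a x * \<omega> 0 0 x a y b) * Vc r b y))^2))
         \<le> O_lowc_norm 1 \<omega>"
        by (rule partB_core[OF Rc Vc])
      have "z * sqrt (\<Sum>r<m. (trace_norm (S r))^2) = sqrt (\<Sum>r<m. (z * trace_norm (S r))^2)"
        using z by (simp add: power_mult_distrib sum_distrib_left[symmetric] real_sqrt_mult)
      also have "\<dots> \<le> sqrt (\<Sum>r<m. (cmod (\<Sum>y\<in>UNIV. \<Sum>b\<in>UNIV. S r y b * Vc r b y))^2)"
      proof (rule real_sqrt_le_mono, rule sum_mono)
        fix r
        show "(z * trace_norm (S r))^2 \<le> (cmod (\<Sum>y\<in>UNIV. \<Sum>b\<in>UNIV. S r y b * Vc r b y))^2"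
          using z(1) tn_nonneg[of "S r"] by (intro power_mono[OF Vz] mult_nonneg_nonneg) auto
      qed
      finally have F: "z * sqrt (\<Sum>r<m. (trace_norm (S r))^2)
          \<le> sqrt (\<Sum>r<m. (cmod (\<Sum>y\<in>UNIV. \<Sum>b\<in>UNIV. S r y b * Vc r b y))^2)" .
      have SR2: "(\<Sum>y\<in>UNIV. \<Sum>b\<in>UNIV. S r y b * Vc r b y) = (\<Sum>y\<in>UNIV. \<Sum>b\<in>UNIV. (\<Sum>x\<in>UNIV. \<Sum>a\<in>UNIV. R r a x * \<omega> 0 0 x a y b) * Vc r b y)" for r
        by (simp only: SR)
      have "z * sqrt (\<Sum>r<m. (trace_norm (S r))^2)
          \<le> sqrt (\<Sum>r<m. (cmod (\<Sum>y\<in>UNIV. \<Sum>b\<in>UNIV. (\<Sum>x\<in>UNIV. \<Sum>a\<in>UNIV. R r a x * \<omega> 0 0 x a y b) * Vc r b y))^2)"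
        using F unfolding SR2 .
      then have "ereal (z * sqrt (\<Sum>r<m. (trace_norm (S r))^2)) \<le> O_lowc_norm 1 \<omega>"
        using core by (meson ereal_less_eq(3) order_trans)
      then show "ereal (z * sqrt (\<Sum>r\<in>I. (trace_norm (\<lambda>y b. \<Sum>s\<in>I. \<eta> s * Zf r s y b))^2)) \<le> O_lowc_norm 1 \<omega>"
        unfolding sumI .
    qed
  qed
  have ex: "(\<Sum>s\<in>I. (cmod ((\<lambda>_. 0::complex) s))^2) \<le> 1" by simp
  have least: "minl2_S1_norm I Zf \<le> c"
    if "\<And>\<eta>. (\<Sum>s\<in>I. (cmod (\<eta> s))^2) \<le> 1 \<Longrightarrow> sqrt (\<Sum>r\<in>I. (trace_norm (\<lambda>y b. \<Sum>s\<in>I. \<eta> s * Zf r s y b))^2) \<le> c" for c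
    using that by (rule minl2_least)
  show ?thesis
    by (rule ereal_sup_le[of "\<lambda>\<eta>. (\<Sum>s\<in>I. (cmod (\<eta> s))^2) \<le> 1"
        "\<lambda>\<eta>. sqrt (\<Sum>r\<in>I. (trace_norm (\<lambda>y b. \<Sum>s\<in>I. \<eta> s * Zf r s y b))^2)", OF up ex least])
  qed
  then show "ereal (minl2_S1_norm ({..<fst mT} \<times> {..<1})
       (\<lambda>(p,j) (q,k) y b. \<Sum>x\<in>UNIV. \<Sum>a\<in>UNIV. snd mT p q a x * \<omega> j k x a y b)) \<le> O_lowc_norm 1 \<omega>"
    using mT unfolding I_def Zf_def by simp
qed

theorem theorem5p14:
  fixes dummy :: "'x::finite \<times> 'a::finite \<times> 'y::finite \<times> 'b::finite"
  shows "(\<forall>n (\<omega> :: nat \<Rightarrow> nat \<Rightarrow> 'x \<Rightarrow> 'a \<Rightarrow> 'y \<Rightarrow> 'b \<Rightarrow> complex).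
            O_lowc_norm n \<omega> \<le> pi2C n \<omega>)
       \<and> (\<forall>\<omega> :: nat \<Rightarrow> nat \<Rightarrow> 'x \<Rightarrow> 'a \<Rightarrow> 'y \<Rightarrow> 'b \<Rightarrow> complex.
            O_lowc_norm 1 \<omega> = pi2C 1 \<omega>)"
  using O_le_pi2C partB by (blast intro: antisym)

end
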